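(* Assume the setting below and let $\lambda>0$ with $\mu_+(\max\{\lambda,1\})\le1$. Assume (A1), (A4), (A5), (A6). If $r$ is a regular equilibrium solution with $r(1)=\lambda$, then $$\alpha_0(\rho,r(\rho))\,\tau(\rho)\le r'(\rho)\le\alpha_1(\rho,r(\rho))\,\tau(\rho)\qquad\text{for all }\rho\in(0,1].$$
   Context: Setting: $n\ge2$; $\kappa$ continuous on $[0,\infty)$, $\kappa_\pm=\max\{\pm\kappa,0\}$, $\mu_\pm(\lambda)=\int_0^\lambda s\kappa_\pm(s)ds$; $f$ solves $f''+\kappa f=0$, $f(0)=0$, $f'(0)=1$. Let $\phi,h:(0,\infty)\to\mathbb R$ and $\Phi(v_1,\dots,v_n)=\sum_{i=1}^n\phi(v_i)+h(v_1\cdots v_n)$. For a function $r$ on $(0,1]$ put $\tau(\rho)=f(r(\rho))/f(\rho)$. An equilibrium solution with $r(1)=\lambda$ is $r\in C^1(0,1]$, twice differentiable on $(0,1)$, with $r'>0$ on $(0,1]$, $r(0):=\lim_{\rho\to0^+}r(\rho)\ge0$, $r(1)=\lambda$, and for $\rho\in(0,1)$ $$f(\rho)\big[\phi''(r')+h''(r'\tau^{n-1})\tau^{2(n-1)}\big]r''=(n-1)\big[f'(r)\phi'(\tau)-f'(\rho)\phi'(r')\big]-(n-1)\big(f'(r)r'-f'(\rho)\tau\big)h''(r'\tau^{n-1})\,r'\tau^{2n-3}$$ (with $r=r(\rho)$, $r'=r'(\rho)$, $\tau=\tau(\rho)$). It is regular if $r(0)=0$. Assumptions: (A1) $h$ is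 $C^2$ and strictly convex. (A4) $\phi:(0,\infty)\to(0,\infty)$ is $C^2$ and convex. (A5) $v\mapsto v\phi'(v)$ is increasing. (A6) there is $t_0\ge0$ with $\phi'(t_0)=0$; with $q_1(s)=\sup_{v>t_0}\phi'(v)/\phi'(sv)$ for $s\ge1$ and $q_0(s)=\inf_{v>t_0/s}\phi'(v)/\phi'(sv)$ for $s\in(0,1]$, one has $q_1\in C^1[1,\infty)$, $q_0\in C^1(0,1]$, $\lim_{s\to\infty}q_1(s)=0$, $\lim_{s\to0^+}q_0(s)=\infty$, $q_1'<0$ on $[1,\infty)$ and $q_0'<0$ on $(0,1]$ (so $q_1(1)=q_0(1)=1$ and $q_1^{-1}:(0,1]\to[1,\infty)$, $q_0^{-1}:[1,\infty)\to(0,1]$ exist). Notation: $b_0(\rho)=\min_{0\le s\le\rho}f'(s)$, $b_1(\rho)=\max_{0\le s\le\rho}f'(s)$; $\alpha_1(\rho,s)=\max\{b_1(\rho)/b_0(s),\,q_1^{-1}(b_0(\rho)/b_1(s))\}$ and $\alpha_0(\rho,s)=\min\{b_0(\rho)/b_1(s),\,q_0^{-1}(b_1(\rho)/b_0(s))\}$ for $(\rho,s)\in[0,1]\times[0,\lambda]$. *)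

theory Defs
  imports "HOL-Analysis.Analysis"
begin

definition strictly_convex_on :: "real set \<Rightarrow> (real \<Rightarrow> real) \<Rightarrow> bool" where
  "strictly_convex_on S g \<longleftrightarrow> convex S \<and>
     (\<forall>x\<in>S. \<forall>y\<in>S. x \<noteq> y \<longrightarrow> (\<forall>t. 0 < t \<and> t < 1 \<longrightarrow>
        g ((1 - t) * x + t * y) < (1 - t) * g x + t * g y))"

definition kappa_plus :: "(real \<Rightarrow> real) \<Rightarrow> real \<Rightarrow> real" where
  "kappa_plus \<kappa> s = max (\<kappa> s) 0"

definition mu_plus :: "(real \<Rightarrow> real) \<Rightarrow> real \<Rightarrow> real" where
  "mu_plus \<kappa> l = integral {0..l} (\<lambda>s. s * kappa_plus \<kappa> s)"

text \<open>b0(rho) = min of f' on [0,rho], b1(rho) = max of f' on [0,rho]; f1 is f'.\<close>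
definition b0 :: "(real \<Rightarrow> real) \<Rightarrow> real \<Rightarrow> real" where
  "b0 f1 \<rho> = Inf (f1 ` {0..\<rho>})"

definition b1 :: "(real \<Rightarrow> real) \<Rightarrow> real \<Rightarrow> real" where
  "b1 f1 \<rho> = Sup (f1 ` {0..\<rho>})"

text \<open>q1, q0 from (A6); phi1 is phi'.\<close>
definition q1 :: "(real \<Rightarrow> real) \<Rightarrow> real \<Rightarrow> real \<Rightarrow> real" where
  "q1 phi1 t0 s = (SUP v\<in>{t0<..}. phi1 v / phi1 (s * v))"

definition q0 :: "(real \<Rightarrow> real) \<Rightarrow> real \<Rightarrow> real \<Rightarrow> real" where
  "q0 phi1 t0 s = (INF v\<in>{t0 / s<..}. phi1 v / phi1 (s * v))"

text \<open>Inverses q1^{-1} : (0,1] \<rightarrow> [1,\<infinity>) and q0^{-1} : [1,\<infinity>) \<rightarrow> (0,1].\<close>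
definition q1_inv :: "(real \<Rightarrow> real) \<Rightarrow> real \<Rightarrow> real \<Rightarrow> real" where
  "q1_inv phi1 t0 y = (THE s. 1 \<le> s \<and> q1 phi1 t0 s = y)"

definition q0_inv :: "(real \<Rightarrow> real) \<Rightarrow> real \<Rightarrow> real \<Rightarrow> real" where
  "q0_inv phi1 t0 y = (THE s. 0 < s \<and> s \<le> 1 \<and> q0 phi1 t0 s = y)"

definition alpha1 :: "(real \<Rightarrow> real) \<Rightarrow> (real \<Rightarrow> real) \<Rightarrow> real \<Rightarrow> real \<Rightarrow> real \<Rightarrow> real" where
  "alpha1 f1 phi1 t0 \<rho> s =
     max (b1 f1 \<rho> / b0 f1 s) (q1_inv phi1 t0 (b0 f1 \<rho> / b1 f1 s))"

definition alpha0 :: "(real \<Rightarrow> real) \<Rightarrow> (real \<Rightarrow> real) \<Rightarrow> real \<Rightarrow> real \<Rightarrow> real \<Rightarrow> real" where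
  "alpha0 f1 phi1 t0 \<rho> s =
     min (b0 f1 \<rho> / b1 f1 s) (q0_inv phi1 t0 (b1 f1 \<rho> / b0 f1 s))"

definition tau :: "(real \<Rightarrow> real) \<Rightarrow> (real \<Rightarrow> real) \<Rightarrow> real \<Rightarrow> real" where
  "tau f r \<rho> = f (r \<rho>) / f \<rho>"

end

theory Submission
  imports Defs
begin


lemma alg_ode:
  fixes ff P Q a b c r1 r2 R T' mm :: real
  assumes P: "P > 0" and ode: "ff * (a + b * P^2) * r2 = mm*R - mm*(ff * T')*b*r1*(P*Q)"
  shows "ff * P * (b * (r2 * P + r1 * (mm * Q * T')) + (a * r2 * P - c * (mm * Q * T')) / P^2)
        = mm*R - mm*ff*c*T'*Q/P"
proof -
  have "ff * P * (b * (r2 * P + r1 * (mm * Q * T')) + (a * r2 * P - c * (mm * Q * T')) / P^2)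
     = ff * (a + b * P^2) * r2 + mm*(ff * T')*b*r1*(P*Q) - mm*ff*c*T'*Q/P"
    using P by (simp add: field_simps power2_eq_square)
  also have "\<dots> = mm*R - mm*ff*c*T'*Q/P" using ode by simp
  finally show ?thesis .
qed

locale eqs =
  fixes n :: nat and \<kappa> f f1 \<phi> phi1 phi2 h h1 h2 r r1 r2 :: "real \<Rightarrow> real"
    and lam t0 :: real
  assumes n2: "n \<ge> 2"
    and kappa_cont: "continuous_on {0..} \<kappa>"
    and f_deriv: "\<And>x. x \<ge> 0 \<Longrightarrow> (f has_real_derivative f1 x) (at x within {0..})"
    and f1_deriv: "\<And>x. x \<ge> 0 \<Longrightarrow> (f1 has_real_derivative (- \<kappa> x * f x)) (at x within {0..})"
    and f0: "f 0 = 0" and f1_0: "f1 0 = 1"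
    and lam_pos: "lam > 0"
    and mu: "mu_plus \<kappa> (max lam 1) \<le> 1"
    and h_deriv: "\<And>v. v > 0 \<Longrightarrow> (h has_real_derivative h1 v) (at v)"
    and h1_deriv: "\<And>v. v > 0 \<Longrightarrow> (h1 has_real_derivative h2 v) (at v)"
    and h2_cont: "continuous_on {0<..} h2"
    and h_strict: "strictly_convex_on {0<..} h"
    and phi_pos: "\<And>v. v > 0 \<Longrightarrow> \<phi> v > 0"
    and phi_deriv: "\<And>v. v > 0 \<Longrightarrow> (\<phi> has_real_derivative phi1 v) (at v)"
    and phi1_deriv: "\<And>v. v > 0 \<Longrightarrow> (phi1 has_real_derivative phi2 v) (at v)"
    and phi2_cont: "continuous_on {0<..} phi2"
    and phi_convex: "convex_on {0<..} \<phi>"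
    and A5: "mono_on {0<..} (\<lambda>v. v * phi1 v)"
    and t0_nonneg: "t0 \<ge> 0"
    and phi1_t0: "(t0 > 0 \<and> phi1 t0 = 0) \<or> (t0 = 0 \<and> (phi1 \<longlongrightarrow> 0) (at_right 0))"
    and q1_C1: "\<exists>dq. continuous_on {1..} dq \<and>
                 (\<forall>s\<ge>1. (q1 phi1 t0 has_real_derivative dq s) (at s within {1..}) \<and> dq s < 0)"
    and q0_C1: "\<exists>dq. continuous_on {0<..1} dq \<and>
                 (\<forall>s. 0 < s \<and> s \<le> 1 \<longrightarrow>
                    (q0 phi1 t0 has_real_derivative dq s) (at s within {0<..1}) \<and> dq s < 0)"
    and q1_lim: "(q1 phi1 t0 \<longlongrightarrow> 0) at_top"
    and q0_lim: "filterlim (q0 phi1 t0) at_top (at_right 0)"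
    and r_deriv: "\<And>\<rho>. 0 < \<rho> \<Longrightarrow> \<rho> \<le> 1 \<Longrightarrow> (r has_real_derivative r1 \<rho>) (at \<rho> within {0<..1})"
    and r1_cont: "continuous_on {0<..1} r1"
    and r1_deriv: "\<And>\<rho>. 0 < \<rho> \<Longrightarrow> \<rho> < 1 \<Longrightarrow> (r1 has_real_derivative r2 \<rho>) (at \<rho>)"
    and r1_pos: "\<And>\<rho>. 0 < \<rho> \<Longrightarrow> \<rho> \<le> 1 \<Longrightarrow> r1 \<rho> > 0"
    and r_regular: "(r \<longlongrightarrow> 0) (at_right 0)"
    and r_1: "r 1 = lam"
    and r_ode: "\<And>\<rho>. 0 < \<rho> \<Longrightarrow> \<rho> < 1 \<Longrightarrow>
       f \<rho> * (phi2 (r1 \<rho>) + h2 (r1 \<rho> * tau f r \<rho> ^ (n - 1)) * tau f r \<rho> ^ (2 * (n - 1))) * r2 \<rho>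
       = real (n - 1) * (f1 (r \<rho>) * phi1 (tau f r \<rho>) - f1 \<rho> * phi1 (r1 \<rho>))
         - real (n - 1) * (f1 (r \<rho>) * r1 \<rho> - f1 \<rho> * tau f r \<rho>)
             * h2 (r1 \<rho> * tau f r \<rho> ^ (n - 1)) * r1 \<rho> * tau f r \<rho> ^ (2 * n - 3)"
begin

lemma convex_deriv_mono:
  fixes F F1 :: "real \<Rightarrow> real"
  assumes "convex_on {0<..} F" "\<And>v. v > 0 \<Longrightarrow> (F has_real_derivative F1 v) (at v)"
    and "0 < x" "x \<le> y"
  shows "F1 x \<le> F1 y"
proof (cases "x = y")
  case False
  hence xy: "x < y" using assms by auto
  have c: "connected {0::real<..}" by (simp add: is_interval_connected is_interval_ci)
  have "F y - F x \<ge> F1 x * (y - x)"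
    using convex_on_imp_above_tangent[OF assms(1) c, of x y "F1 x"] assms xy
    by (auto simp: interior_open[OF open_greaterThan] at_within_open[of x "{0<..}"])
  moreover have "F x - F y \<ge> F1 y * (x - y)"
    using convex_on_imp_above_tangent[OF assms(1) c, of y x "F1 y"] assms xy
    by (auto simp: interior_open[OF open_greaterThan] at_within_open[of y "{0<..}"])
  ultimately have "F1 x * (y - x) \<le> F1 y * (y - x)" by (simp add: algebra_simps)
  thus ?thesis using xy by simp
qed simp

lemma mono_deriv_nonneg:
  fixes F1 F2 :: "real \<Rightarrow> real"
  assumes "\<And>x y. 0 < x \<Longrightarrow> x \<le> y \<Longrightarrow> F1 x \<le> F1 y"
    and "(F1 has_real_derivative F2 v) (at v)" "v > 0"
  shows "F2 v \<ge> 0"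
proof (rule ccontr)
  assume "\<not> ?thesis"
  then obtain d where d: "d > 0" "\<forall>h>0. h < d \<longrightarrow> F1 v > F1 (v + h)"
    using DERIV_neg_dec_right[OF assms(2)] by force
  have "F1 v > F1 (v + d/2)" using d by auto
  moreover have "F1 v \<le> F1 (v + d/2)" using assms(1)[of v "v + d/2"] d assms(3) by auto
  ultimately show False by simp
qed

lemma phi1_mono: "0 < x \<Longrightarrow> x \<le> y \<Longrightarrow> phi1 x \<le> phi1 y"
  using convex_deriv_mono[OF phi_convex phi_deriv] by blast

lemma phi2_nonneg: assumes "v > 0" shows "phi2 v \<ge> 0"
  by (rule mono_deriv_nonneg[of phi1 phi2 v]) (use phi1_mono phi1_deriv assms in auto)

lemma h_convex: "convex_on {0<..} h"
proof (rule convex_onI)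
  show "convex {0::real<..}" by simp
  fix t x y :: real assume "0 < t" "t < 1" "x \<in> {0<..}" "y \<in> {0<..}"
  thus "h ((1 - t) *\<^sub>R x + t *\<^sub>R y) \<le> (1 - t) * h x + t * h y"
  proof (cases "x = y")
    case False
    then have "h ((1 - t) * x + t * y) < (1 - t) * h x + t * h y"
      using h_strict \<open>0 < t\<close> \<open>t < 1\<close> \<open>x \<in> {0<..}\<close> \<open>y \<in> {0<..}\<close>
      unfolding strictly_convex_on_def by blast
    then show ?thesis by simp
  qed (simp add: algebra_simps)
qed

lemma h1_strict: assumes "0 < x" "x < y" shows "h1 x < h1 y"
proof -
  have c: "connected {0::real<..}" by (simp add: is_interval_connected is_interval_ci)
  define m where "m = (x + y) / 2"
  have m: "x < m" "m < y" using assms by (auto simp: m_def)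
  have "h m - h x \<ge> h1 x * (m - x)"
    using convex_on_imp_above_tangent[OF h_convex c, of x m "h1 x"] assms m h_deriv[of x]
    by (auto simp: interior_open[OF open_greaterThan] at_within_open[of x "{0<..}"])
  moreover have "h m - h y \<ge> h1 y * (m - y)"
    using convex_on_imp_above_tangent[OF h_convex c, of y m "h1 y"] assms m h_deriv[of y]
    by (auto simp: interior_open[OF open_greaterThan] at_within_open[of y "{0<..}"])
  moreover have "h ((1 - 1/2) * x + (1/2) * y) < (1 - 1/2) * h x + (1/2) * h y"
  proof -
    have "\<forall>t. 0 < t \<and> t < 1 \<longrightarrow> h ((1 - t) * x + t * y) < (1 - t) * h x + t * h y"
      using h_strict assms unfolding strictly_convex_on_def by auto
    then show ?thesis by (drule_tac spec[of _ "1/2"]) simp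
  qed
  moreover have "(1 - 1/2) * x + (1/2) * y = m" by (simp add: m_def)
  ultimately have A: "h1 x * (m - x) \<le> h m - h x" "h1 y * (m - y) \<le> h m - h y"
     "h m < h x / 2 + h y / 2" by auto
  have B: "m - y = -(m - x)" by (simp add: m_def field_simps)
  have "h1 x * (m - x) < h1 y * (m - x)" using A unfolding B by linarith
  thus ?thesis using m by simp
qed

lemma h2_nonneg: "v > 0 \<Longrightarrow> h2 v \<ge> 0"
  using mono_deriv_nonneg[of h1 h2 v] h1_deriv h1_strict
  by (metis less_eq_real_def)

lemma phi1_nonneg: assumes "v > t0" shows "phi1 v \<ge> 0"
  using phi1_t0
proof
  assume "t0 > 0 \<and> phi1 t0 = 0" thus ?thesis using phi1_mono[of t0 v] assms by auto
next
  assume a: "t0 = 0 \<and> (phi1 \<longlongrightarrow> 0) (at_right 0)"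
  have "eventually (\<lambda>x. phi1 x \<le> phi1 v) (at_right 0)"
    using eventually_at_right_real[of 0 v] assms a
    by (auto elim!: eventually_mono intro: phi1_mono)
  thus ?thesis using a tendsto_upperbound[of phi1 0 "at_right 0" "phi1 v"] by auto
qed

lemma phi1_nonpos: assumes "0 < v" "v \<le> t0" shows "phi1 v \<le> 0"
  using phi1_t0 phi1_mono[of v t0] assms by auto

abbreviation "Q1 \<equiv> q1 phi1 t0"
abbreviation "Q0 \<equiv> q0 phi1 t0"

lemma Q1_ratio: "s \<ge> 1 \<Longrightarrow> v > t0 \<Longrightarrow> 0 \<le> phi1 v / phi1 (s * v) \<and> phi1 v / phi1 (s * v) \<le> 1"
proof -
  assume s: "s \<ge> 1" and v: "v > t0"
  have v0: "v > 0" using v t0_nonneg by auto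
  have "v \<le> s * v" using s v0 by (simp add: mult_le_cancel_right1)
  hence "phi1 v \<le> phi1 (s * v)" using phi1_mono v0 by auto
  moreover have "phi1 v \<ge> 0" using phi1_nonneg v by auto
  ultimately show ?thesis by (cases "phi1 (s * v) = 0") (auto simp: divide_le_eq_1)
qed

lemma Q1_bdd: "s \<ge> 1 \<Longrightarrow> bdd_above ((\<lambda>v. phi1 v / phi1 (s * v)) ` {t0<..})"
  using Q1_ratio by (auto intro!: bdd_aboveI[of _ 1])

lemma Q1_upper: "s \<ge> 1 \<Longrightarrow> v > t0 \<Longrightarrow> phi1 v / phi1 (s * v) \<le> Q1 s"
  unfolding q1_def by (rule cSUP_upper[OF _ Q1_bdd]) auto

lemma Q1_cont: "continuous_on {1..} Q1"
proof -
  obtain dq where dq: "\<forall>s\<ge>1. (Q1 has_real_derivative dq s) (at s within {1..}) \<and> dq s < 0"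
    using q1_C1 by blast
  show ?thesis unfolding continuous_on_eq_continuous_within
  proof
    fix x :: real assume "x \<in> {1..}"
    thus "continuous (at x within {1..}) Q1" using dq DERIV_continuous by (meson atLeast_iff)
  qed
qed

lemma Q1_strict: assumes "1 \<le> a" "a < b" shows "Q1 b < Q1 a"
proof -
  obtain dq where dq: "\<forall>s\<ge>1. (Q1 has_real_derivative dq s) (at s within {1..}) \<and> dq s < 0"
    using q1_C1 by blast
  show ?thesis
  proof (rule DERIV_neg_imp_decreasing_open[OF assms(2)])
    fix x assume x: "a < x" "x < b"
    have xx: "x \<ge> 1" using x assms by auto
    have D: "(Q1 has_real_derivative dq x) (at x within {1..})" "dq x < 0" using dq xx by auto
    have "(Q1 has_real_derivative dq x) (at x within {1<..})"
      by (rule DERIV_subset[OF D(1)]) auto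
    hence "(Q1 has_real_derivative dq x) (at x)"
      using xx x assms by (subst (asm) at_within_open) auto
    thus "\<exists>y. (Q1 has_real_derivative y) (at x) \<and> y < 0" using D(2) by blast
  next
    show "continuous_on {a..b} Q1" by (rule continuous_on_subset[OF Q1_cont]) (use assms in auto)
  qed
qed

lemma phi1_pos_exists: "\<exists>v>t0. phi1 v > 0"
proof (rule ccontr)
  assume "\<not> ?thesis"
  hence z: "phi1 v = 0" if "v > t0" for v using phi1_nonneg[OF that] that by (meson linorder_neqE_linordered_idom not_less)
  have "\<And>s. s \<ge> 1 \<Longrightarrow> Q1 s = 0"
  proof -
    fix s :: real assume s: "s \<ge> 1"
    have "(\<lambda>v. phi1 v / phi1 (s * v)) ` {t0<..} = (\<lambda>v. 0) ` {t0<..}"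
      by (rule image_cong) (use z in auto)
    also have "\<dots> = {0}" by (subst image_constant_conv) auto
    finally have "(\<lambda>v. phi1 v / phi1 (s * v)) ` {t0<..} = {0}" .
    thus "Q1 s = 0" unfolding q1_def by simp
  qed
  moreover have "Q1 2 < Q1 1" using Q1_strict[of 1 2] by simp
  ultimately show False by simp
qed

lemma Q1_one: "Q1 1 \<ge> 1"
proof -
  obtain v where v: "v > t0" "phi1 v > 0" using phi1_pos_exists by blast
  have "phi1 v / phi1 (1 * v) \<le> Q1 1" using Q1_upper[of 1 v] v by simp
  thus ?thesis using v by simp
qed

lemma Q1_inv: assumes "0 < y" "y \<le> 1"
  shows "q1_inv phi1 t0 y \<ge> 1 \<and> Q1 (q1_inv phi1 t0 y) = y"
proof -
  obtain N where N: "\<forall>x\<ge>N. Q1 x < y"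
    using order_tendstoD(2)[OF q1_lim assms(1)] unfolding eventually_at_top_linorder by blast
  define b where "b = max N 1"
  have "Q1 b < y" using N by (simp add: b_def)
  have b1: "1 \<le> b" by (simp add: b_def)
  have cb: "continuous_on {1..b} Q1" by (rule continuous_on_subset[OF Q1_cont]) auto
  have "Q1 b \<le> y" "y \<le> Q1 1" using \<open>Q1 b < y\<close> Q1_one assms by auto
  then obtain s where s: "1 \<le> s" "s \<le> b" "Q1 s = y"
    using IVT2'[of Q1 b y 1, OF _ _ b1 cb] by blast
  have uniq: "s' = s" if "1 \<le> s' \<and> Q1 s' = y" for s'
  proof (rule ccontr)
    assume "s' \<noteq> s"
    hence "s' < s \<or> s < s'" by auto
    thus False using Q1_strict[of s' s] Q1_strict[of s s'] s that by auto
  qed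
  have "q1_inv phi1 t0 y = s"
    unfolding q1_inv_def by (rule the_equality) (use s in simp, use uniq in blast)
  thus ?thesis using s by simp
qed

lemma Q0_ratio: "0 < s \<Longrightarrow> s \<le> 1 \<Longrightarrow> s * v > t0 \<Longrightarrow>
   0 \<le> phi1 v / phi1 (s * v) \<and> phi1 (s * v) \<le> phi1 v"
proof -
  assume s: "0 < s" "s \<le> 1" and v: "s * v > t0"
  have sv0: "s * v > 0" using v t0_nonneg by linarith
  hence v0: "v > 0" using s zero_less_mult_pos by blast
  have "s * v \<le> 1 * v" using s v0 by (intro mult_right_mono) auto
  hence "phi1 (s * v) \<le> phi1 v" using phi1_mono[OF sv0] by simp
  moreover have "phi1 (s * v) \<ge> 0" using phi1_nonneg[OF v] .
  ultimately show ?thesis by (simp add: divide_nonneg_nonneg)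
qed

lemma Q0_lower: assumes "0 < s" "s \<le> 1" "v > t0 / s" shows "Q0 s \<le> phi1 v / phi1 (s * v)"
proof -
  have sv: "s * v > t0" if "v > t0 / s" for v using assms that by (simp add: divide_less_eq mult.commute)
  have "bdd_below ((\<lambda>v. phi1 v / phi1 (s * v)) ` {t0/s<..})"
  proof (rule bdd_belowI[of _ 0])
    fix x assume "x \<in> (\<lambda>v. phi1 v / phi1 (s * v)) ` {t0/s<..}"
    then obtain w where "w > t0 / s" "x = phi1 w / phi1 (s * w)" by auto
    thus "0 \<le> x" using Q0_ratio[OF assms(1,2) sv[of w]] by simp
  qed
  thus ?thesis unfolding q0_def by (rule cINF_lower) (use assms in auto)
qed

lemma Q0_cont: "continuous_on {0<..1} Q0"
proof -
  obtain dq where dq: "\<forall>s. 0 < s \<and> s \<le> 1 \<longrightarrow> (Q0 has_real_derivative dq s) (at s within {0<..1}) \<and> dq s < 0"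
    using q0_C1 by blast
  show ?thesis unfolding continuous_on_eq_continuous_within
  proof
    fix x :: real assume "x \<in> {0<..1}"
    thus "continuous (at x within {0<..1}) Q0" using dq DERIV_continuous by (meson greaterThanAtMost_iff)
  qed
qed

lemma Q0_strict: assumes "0 < a" "a < b" "b \<le> 1" shows "Q0 b < Q0 a"
proof -
  obtain dq where dq: "\<forall>s. 0 < s \<and> s \<le> 1 \<longrightarrow> (Q0 has_real_derivative dq s) (at s within {0<..1}) \<and> dq s < 0"
    using q0_C1 by blast
  show ?thesis
  proof (rule DERIV_neg_imp_decreasing_open[OF assms(2)])
    fix x assume x: "a < x" "x < b"
    have xx: "0 < x \<and> x \<le> 1" using x assms by auto
    have D: "(Q0 has_real_derivative dq x) (at x within {0<..1})" "dq x < 0" using dq xx by auto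
    have "(Q0 has_real_derivative dq x) (at x within {0<..<1})"
      by (rule DERIV_subset[OF D(1)]) auto
    hence "(Q0 has_real_derivative dq x) (at x)"
      using xx x assms by (subst (asm) at_within_open) auto
    thus "\<exists>y. (Q0 has_real_derivative y) (at x) \<and> y < 0" using D(2) by blast
  next
    show "continuous_on {a..b} Q0" by (rule continuous_on_subset[OF Q0_cont]) (use assms in auto)
  qed
qed

lemma Q0_one: "Q0 1 \<le> 1"
proof -
  have "Q0 1 \<le> phi1 (t0+1) / phi1 (1*(t0+1))" using Q0_lower[of 1 "t0+1"] by simp
  also have "\<dots> \<le> 1" by (cases "phi1 (t0+1) = 0") auto
  finally show ?thesis .
qed

lemma Q0_inv: assumes "1 \<le> y"
  shows "0 < q0_inv phi1 t0 y \<and> q0_inv phi1 t0 y \<le> 1 \<and> Q0 (q0_inv phi1 t0 y) = y"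
proof -
  have "eventually (\<lambda>x. y < Q0 x) (at_right 0)"
    using q0_lim unfolding filterlim_at_top_dense by blast
  then obtain d where d: "d > 0" "\<And>x. x > 0 \<Longrightarrow> x < d \<Longrightarrow> y < Q0 x"
    unfolding eventually_at_right_field by auto
  define a where "a = min (d/2) (1/2)"
  have a: "0 < a" "a < 1" "y < Q0 a" using d by (auto simp: a_def)
  have cb: "continuous_on {a..1} Q0" by (rule continuous_on_subset[OF Q0_cont]) (use a in auto)
  have "Q0 1 \<le> y" "y \<le> Q0 a" using a Q0_one assms by auto
  then obtain s where s: "a \<le> s" "s \<le> 1" "Q0 s = y"
    using IVT2'[of Q0 1 y a, OF _ _ _ cb] a by auto
  have s0: "0 < s" using s a by auto
  have uniq: "s' = s" if "0 < s' \<and> s' \<le> 1 \<and> Q0 s' = y" for s'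
  proof (rule ccontr)
    assume "s' \<noteq> s"
    hence "s' < s \<or> s < s'" by auto
    thus False using Q0_strict[of s' s] Q0_strict[of s s'] s s0 that by auto
  qed
  have "q0_inv phi1 t0 y = s"
    unfolding q0_inv_def by (rule the_equality) (use s s0 in simp, use uniq in blast)
  thus ?thesis using s s0 by simp
qed

definition "LL = max lam 1"

lemma LL_ge: "1 \<le> LL" "lam \<le> LL" by (auto simp: LL_def)

lemma f1_at: assumes "x > 0" shows "(f1 has_real_derivative (- \<kappa> x * f x)) (at x)"
proof -
  have "(f1 has_real_derivative (- \<kappa> x * f x)) (at x within {0<..})"
    by (rule DERIV_subset[OF f1_deriv]) (use assms in auto)
  thus ?thesis using assms by (subst (asm) at_within_open) auto
qed

lemma f_at: assumes "x > 0" shows "(f has_real_derivative f1 x) (at x)"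
proof -
  have "(f has_real_derivative f1 x) (at x within {0<..})"
    by (rule DERIV_subset[OF f_deriv]) (use assms in auto)
  thus ?thesis using assms by (subst (asm) at_within_open) auto
qed

lemma f1_cont: "continuous_on {0..} f1"
  unfolding continuous_on_eq_continuous_within
proof
  fix x :: real assume "x \<in> {0..}"
  thus "continuous (at x within {0..}) f1" using f1_deriv DERIV_continuous by (meson atLeast_iff)
qed

lemma f_cont: "continuous_on {0..} f"
  unfolding continuous_on_eq_continuous_within
proof
  fix x :: real assume "x \<in> {0..}"
  thus "continuous (at x within {0..}) f" using f_deriv DERIV_continuous by (meson atLeast_iff)
qed

lemma kp_cont: "continuous_on {0..} (\<lambda>t. t * kappa_plus \<kappa> t)"
  unfolding kappa_plus_def by (intro continuous_intros kappa_cont)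

lemma f_strict_mono_on:
  assumes "0 \<le> a" "a < b" "\<And>s. a < s \<Longrightarrow> s < b \<Longrightarrow> f1 s > 0"
  shows "f a < f b"
proof (rule DERIV_pos_imp_increasing_open[OF assms(2)])
  fix x assume "a < x" "x < b"
  thus "\<exists>y. (f has_real_derivative y) (at x) \<and> 0 < y"
    using f_at[of x] assms(1) assms(3)[of x] by auto
next
  show "continuous_on {a..b} f" by (rule continuous_on_subset[OF f_cont]) (use assms in auto)
qed

lemma f1_pos_step:
  assumes x: "0 < x" "x \<le> LL" and pos: "\<And>s. 0 \<le> s \<Longrightarrow> s < x \<Longrightarrow> f1 s > 0"
  shows "f1 x > 0"
proof -
  define M where "M = (\<lambda>s. integral {0..s} (\<lambda>t. t * kappa_plus \<kappa> t))"
  have fmono: "f a < f b" if "0 \<le> a" "a < b" "b \<le> x" for a b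
    using f_strict_mono_on[of a b] pos that by auto
  have fnn: "f s \<ge> 0" if "0 \<le> s" "s \<le> x" for s
    using fmono[of 0 s] that f0 by (cases "s = 0") auto
  have fle: "f s \<le> f x" if "0 \<le> s" "s \<le> x" for s
    using fmono[of s x] that by (cases "s = x") auto
  have fx: "f x > 0" using fmono[of 0 x] x f0 by auto
  have kc: "continuous_on {0..x} (\<lambda>t. t * kappa_plus \<kappa> t)"
    by (rule continuous_on_subset[OF kp_cont]) auto
  have Md: "(M has_real_derivative (s * kappa_plus \<kappa> s)) (at s within {0..x})" if "s \<in> {0..x}" for s
    unfolding M_def has_real_derivative_iff_has_vector_derivative
    by (rule integral_has_vector_derivative[OF kc that])
  have Mcont: "continuous_on {0..x} M"
    unfolding continuous_on_eq_continuous_within using Md DERIV_continuous by blast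
  have M0: "M 0 = 0" by (simp add: M_def)
  have Mx: "M x \<le> 1"
  proof -
    have kcL: "continuous_on {0..LL} (\<lambda>t. t * kappa_plus \<kappa> t)"
      by (rule continuous_on_subset[OF kp_cont]) auto
    have MdL: "(M has_real_derivative (s * kappa_plus \<kappa> s)) (at s within {0..LL})" if "s \<in> {0..LL}" for s
      unfolding M_def has_real_derivative_iff_has_vector_derivative
      by (rule integral_has_vector_derivative[OF kcL that])
    have "M x \<le> M LL"
    proof (rule DERIV_nonneg_imp_increasing_open[OF x(2)])
      fix y assume y: "x < y" "y < LL"
      have "y \<in> {0..LL}" using x y by auto
      from MdL[OF this] have "(M has_real_derivative (y * kappa_plus \<kappa> y)) (at y)"
        using y x by (subst (asm) at_within_interior) auto
      moreover have "y * kappa_plus \<kappa> y \<ge> 0" using y x by (simp add: kappa_plus_def)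
      ultimately show "\<exists>d. (M has_real_derivative d) (at y) \<and> 0 \<le> d" by blast
    next
      show "continuous_on {x..LL} M"
        unfolding continuous_on_eq_continuous_within
      proof
        fix y assume "y \<in> {x..LL}"
        hence "y \<in> {0..LL}" using x by auto
        hence "continuous (at y within {0..LL}) M" using MdL DERIV_continuous by blast
        thus "continuous (at y within {x..LL}) M" by (rule continuous_within_subset) (use x in auto)
      qed
    qed
    also have "M LL = mu_plus \<kappa> (max lam 1)" by (simp add: M_def mu_plus_def LL_def)
    finally show ?thesis using mu by simp
  qed
  define z where "z = (\<lambda>s. s * f1 s - f s + f x * M s)"
  define z' where "z' = (\<lambda>s. s * (f x * kappa_plus \<kappa> s - \<kappa> s * f s))"
  have zd: "(z has_real_derivative z' s) (at s)" if "0 < s" "s < x" for s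
  proof -
    have "s \<in> {0..x}" using that by auto
    from Md[OF this] have "(M has_real_derivative (s * kappa_plus \<kappa> s)) (at s)"
      using that by (subst (asm) at_within_interior) auto
    hence d2: "((\<lambda>u. f x * M u) has_real_derivative f x * (s * kappa_plus \<kappa> s)) (at s)"
      by (rule DERIV_cmult)
    have d1: "((\<lambda>u. u * f1 u) has_real_derivative (1 * f1 s + (- \<kappa> s * f s) * s)) (at s)"
      by (rule DERIV_mult[OF DERIV_ident f1_at]) (use that in auto)
    have "(z has_real_derivative ((1 * f1 s + (- \<kappa> s * f s) * s) - f1 s + f x * (s * kappa_plus \<kappa> s))) (at s)"
      unfolding z_def by (intro DERIV_add DERIV_diff d1 d2 f_at) (use that in auto)
    moreover have "(1 * f1 s + (- \<kappa> s * f s) * s) - f1 s + f x * (s * kappa_plus \<kappa> s) = z' s"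
      by (simp add: z'_def algebra_simps)
    ultimately show ?thesis by simp
  qed
  have z'nn: "z' s \<ge> s * kappa_plus \<kappa> s * (f x - f s)" "s * kappa_plus \<kappa> s * (f x - f s) \<ge> 0"
    if "0 < s" "s < x" for s
  proof -
    have "kappa_plus \<kappa> s \<ge> 0" "kappa_plus \<kappa> s \<ge> \<kappa> s" by (auto simp: kappa_plus_def)
    moreover have "f s \<ge> 0" "f s \<le> f x" using fnn fle that by auto
    ultimately have "kappa_plus \<kappa> s * f s \<ge> \<kappa> s * f s" "kappa_plus \<kappa> s * (f x - f s) \<ge> 0"
      by (auto intro: mult_right_mono)
    thus "z' s \<ge> s * kappa_plus \<kappa> s * (f x - f s)" "s * kappa_plus \<kappa> s * (f x - f s) \<ge> 0"
      using that unfolding z'_def by (auto simp: algebra_simps intro!: mult_left_mono)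
  qed
  have zcont: "continuous_on {0..x} z"
    unfolding z_def by (intro continuous_intros Mcont continuous_on_subset[OF f1_cont] continuous_on_subset[OF f_cont]) auto
  have zmono: "z a \<le> z b" if "0 \<le> a" "a \<le> b" "b \<le> x" for a b
  proof (rule DERIV_nonneg_imp_increasing_open[OF that(2)])
    fix y assume "a < y" "y < b"
    thus "\<exists>d. (z has_real_derivative d) (at y) \<and> 0 \<le> d"
      using zd[of y] z'nn[of y] that by force
  next
    show "continuous_on {a..b} z" by (rule continuous_on_subset[OF zcont]) (use that in auto)
  qed
  have z0: "z 0 = 0" by (simp add: z_def f0 M0)
  show ?thesis
  proof (rule ccontr)
    assume "\<not> f1 x > 0"
    hence f1x: "f1 x \<le> 0" by simp
    have "z x \<ge> 0" using zmono[of 0 x] x z0 by auto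
    moreover have "z x \<le> 0"
    proof -
      have "x * f1 x \<le> 0" using f1x x by (simp add: mult_nonneg_nonpos)
      moreover have "f x * M x \<le> f x" using Mx fx by (simp add: mult_left_le)
      ultimately show ?thesis by (simp add: z_def)
    qed
    ultimately have zx: "z x = 0" by simp
    show False
    proof (cases "\<exists>s1. 0 < s1 \<and> s1 < x \<and> kappa_plus \<kappa> s1 > 0")
      case True
      then obtain s1 where s1: "0 < s1" "s1 < x" "kappa_plus \<kappa> s1 > 0" by blast
      have "f s1 < f x" using fmono[of s1 x] s1 by auto
      hence "z' s1 > 0" using z'nn(1)[of s1] s1 by (smt (verit) mult_pos_pos)
      then obtain d where d: "d > 0" "\<And>h. h > 0 \<Longrightarrow> h < d \<Longrightarrow> z s1 < z (s1 + h)"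
        using DERIV_pos_inc_right[OF zd[OF s1(1,2)]] by blast
      define hh where "hh = min (d/2) ((x - s1)/2)"
      have h1: "hh \<le> (x - s1)/2" unfolding hh_def by (rule min.cobounded2)
      have h2: "hh \<le> d/2" unfolding hh_def by (rule min.cobounded1)
      have h3: "hh > 0" unfolding hh_def using d s1 by simp
      have hh: "hh > 0" "hh < d" using h2 h3 d(1) by linarith+
      have hh3: "s1 + hh \<le> x" using h1 s1(2) by (simp add: field_simps)
      have "z 0 \<le> z s1" using zmono[of 0 s1] s1 by auto
      also have "\<dots> < z (s1 + hh)" using d hh by auto
      also have "\<dots> \<le> z x" using zmono[of "s1 + hh" x] hh hh3 s1 by auto
      finally show False using z0 zx by simp
    next
      case False
      have "M x = integral {0..x} (\<lambda>t. 0::real)"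
        unfolding M_def
      proof (rule integral_spike[of "{0, x}"])
        show "negligible {0, x::real}" by simp
        fix t assume "t \<in> {0..x} - {0, x}"
        hence "0 < t" "t < x" by auto
        hence "\<not> kappa_plus \<kappa> t > 0" using False by blast
        moreover have "kappa_plus \<kappa> t \<ge> 0" by (simp add: kappa_plus_def)
        ultimately show "0 = t * kappa_plus \<kappa> t" by simp
      qed
      hence "M x = 0" by simp
      hence "z x = x * f1 x - f x" by (simp add: z_def)
      hence "z x < 0" using f1x x fx by (smt (verit) mult_nonneg_nonpos)
      thus False using zx by simp
    qed
  qed
qed

lemma f1_pos: assumes "0 \<le> x" "x \<le> LL" shows "f1 x > 0"
proof (rule ccontr)
  assume nx: "\<not> f1 x > 0"
  define S where "S = {0..LL} \<inter> f1 -` {..0}"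
  have cS: "closed S" unfolding S_def
    by (rule continuous_closed_preimage) (auto intro: continuous_on_subset[OF f1_cont])
  have xS: "x \<in> S" using assms nx by (auto simp: S_def)
  have bS: "bdd_below S" by (rule bdd_belowI[of _ 0]) (auto simp: S_def)
  define x1 where "x1 = Inf S"
  have x1S: "x1 \<in> S" unfolding x1_def using closed_contains_Inf[OF _ bS cS] xS by blast
  hence x1: "0 \<le> x1" "x1 \<le> LL" "f1 x1 \<le> 0" by (auto simp: S_def)
  have "x1 \<noteq> 0" using x1 f1_0 by auto
  hence x1p: "0 < x1" using x1 by simp
  have "f1 s > 0" if "0 \<le> s" "s < x1" for s
  proof (rule ccontr)
    assume "\<not> f1 s > 0"
    hence "s \<in> S" using that x1 by (auto simp: S_def)
    hence "x1 \<le> s" unfolding x1_def using bS by (rule cInf_lower)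
    thus False using that by simp
  qed
  hence "f1 x1 > 0" using f1_pos_step[OF x1p x1(2)] by blast
  thus False using x1 by simp
qed

lemma f_mono: assumes "0 \<le> a" "a < b" "b \<le> LL" shows "f a < f b"
  using f_strict_mono_on[OF assms(1,2)] f1_pos assms by auto

lemma f_pos: assumes "0 < x" "x \<le> LL" shows "f x > 0"
  using f_mono[of 0 x] assms f0 by auto

lemma f1_img: assumes "0 \<le> x" shows "compact (f1 ` {0..x})" "f1 ` {0..x} \<noteq> {}"
  using assms by (auto intro!: compact_continuous_image continuous_on_subset[OF f1_cont])

lemma b0_le: assumes "0 \<le> s" "s \<le> x" shows "b0 f1 x \<le> f1 s"
  unfolding b0_def
  by (rule cInf_lower) (use assms f1_img[of x] in \<open>auto intro!: bounded_imp_bdd_below compact_imp_bounded\<close>)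

lemma b1_ge: assumes "0 \<le> s" "s \<le> x" shows "f1 s \<le> b1 f1 x"
  unfolding b1_def
  by (rule cSup_upper) (use assms f1_img[of x] in \<open>auto intro!: bounded_imp_bdd_above compact_imp_bounded\<close>)

lemma b0_pos: assumes "0 \<le> x" "x \<le> LL" shows "b0 f1 x > 0"
proof -
  obtain x0 where x0: "x0 \<in> {0..x}" "\<And>y. y \<in> {0..x} \<Longrightarrow> f1 x0 \<le> f1 y"
    using continuous_attains_inf[of "{0..x}" f1] continuous_on_subset[OF f1_cont, of "{0..x}"] assms
    by auto
  have "b0 f1 x = f1 x0" unfolding b0_def
    by (rule cInf_eq_minimum) (use x0 in auto)
  thus ?thesis using f1_pos[of x0] x0 assms by auto
qed

lemma b_bounds: assumes "0 \<le> x" shows "b0 f1 x \<le> 1" "1 \<le> b1 f1 x"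
  using b0_le[of 0 x] b1_ge[of 0 x] assms f1_0 by auto

lemma f_lim: "((\<lambda>x. f x / x) \<longlongrightarrow> 1) (at_right 0)"
proof -
  have "((\<lambda>y. (f y - f 0) / (y - 0)) \<longlongrightarrow> f1 0) (at 0 within {0..})"
    using f_deriv[of 0] by (simp add: has_field_derivative_iff)
  hence "((\<lambda>y. (f y - f 0) / (y - 0)) \<longlongrightarrow> f1 0) (at_right 0)"
    by (rule tendsto_mono[rotated]) (rule at_le, auto)
  thus ?thesis using f0 f1_0 by simp
qed

lemma r_at: assumes "0 < x" "x < 1" shows "(r has_real_derivative r1 x) (at x)"
proof -
  have "(r has_real_derivative r1 x) (at x within {0<..<1})"
    by (rule DERIV_subset[OF r_deriv]) (use assms in auto)
  thus ?thesis using assms by (subst (asm) at_within_open) auto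
qed

lemma r_cont: "continuous_on {0<..1} r"
  unfolding continuous_on_eq_continuous_within
proof
  fix x :: real assume "x \<in> {0<..1}"
  thus "continuous (at x within {0<..1}) r" using r_deriv DERIV_continuous by (meson greaterThanAtMost_iff)
qed

lemma r_mono: assumes "0 < a" "a < b" "b \<le> 1" shows "r a < r b"
proof (rule DERIV_pos_imp_increasing_open[OF assms(2)])
  fix x assume "a < x" "x < b"
  thus "\<exists>y. (r has_real_derivative y) (at x) \<and> 0 < y"
    using r_at[of x] r1_pos[of x] assms by auto
next
  show "continuous_on {a..b} r" by (rule continuous_on_subset[OF r_cont]) (use assms in auto)
qed

lemma r_pos: assumes "0 < x" "x \<le> 1" shows "r x > 0"
proof -
  have "eventually (\<lambda>y. r y \<le> r (x/2)) (at_right 0)"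
    using eventually_at_right_real[of 0 "x/2"]
  proof (rule eventually_mono)
    fix y assume "y \<in> {0<..<x/2}"
    thus "r y \<le> r (x/2)" using r_mono[of y "x/2"] assms by auto
  qed (use assms in simp)
  hence "0 \<le> r (x/2)" using r_regular tendsto_upperbound[of r 0 "at_right 0" "r (x/2)"] by auto
  thus ?thesis using r_mono[of "x/2" x] assms by auto
qed

lemma r_le: assumes "0 < x" "x \<le> 1" shows "r x \<le> lam"
  using r_mono[of x 1] assms r_1 by (cases "x = 1") auto

lemma r_LL: assumes "0 < x" "x \<le> 1" shows "0 < r x" "r x \<le> LL"
  using r_pos[OF assms] r_le[OF assms] LL_ge by auto

abbreviation "T \<equiv> tau f r"

definition "T' x = (f1 (r x) * r1 x - f1 x * T x) / f x"

lemma T_pos: assumes "0 < x" "x \<le> 1" shows "T x > 0"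
  unfolding tau_def using f_pos[of "r x"] f_pos[of x] r_LL[OF assms] assms LL_ge by auto

lemma f_x_pos: assumes "0 < x" "x \<le> 1" shows "f x > 0"
  using f_pos[of x] assms LL_ge by auto

lemma T_at: assumes "0 < x" "x < 1" shows "(T has_real_derivative T' x) (at x)"
proof -
  have x1: "x \<le> 1" using assms by simp
  have "((\<lambda>y. f (r y)) has_real_derivative f1 (r x) * r1 x) (at x)"
    by (rule DERIV_chain2[OF f_at r_at]) (use r_LL[OF assms(1) x1] assms in auto)
  hence "((\<lambda>y. f (r y) / f y) has_real_derivative
      (f1 (r x) * r1 x * f x - f (r x) * f1 x) / (f x * f x)) (at x)"
    by (rule DERIV_divide[OF _ f_at]) (use f_x_pos[OF assms(1) x1] assms in auto)
  moreover have "(f1 (r x) * r1 x * f x - f (r x) * f1 x) / (f x * f x) = T' x"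
    unfolding T'_def tau_def using f_x_pos[OF assms(1) x1] by (simp add: field_simps)
  ultimately show ?thesis unfolding tau_def[abs_def] by simp
qed

lemma T_cont: "continuous_on {0<..1} T"
proof -
  have "continuous_on {0<..1} (\<lambda>y. f (r y))"
    by (rule continuous_on_compose2[OF f_cont r_cont]) (use r_pos in \<open>auto simp: less_imp_le\<close>)
  moreover have "continuous_on {0<..1} f" by (rule continuous_on_subset[OF f_cont]) auto
  ultimately show ?thesis unfolding tau_def[abs_def]
    by (rule continuous_on_divide) (use f_x_pos in force)
qed

definition "mm = n - 1"
lemma mm_pos: "mm \<ge> 1" using n2 by (simp add: mm_def)

definition "GG x = r1 x / T x"
definition "DD x = r1 x * T x ^ mm"
definition "DD' x = r2 x * T x ^ mm + r1 x * (real mm * T x ^ (mm - 1) * T' x)"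
definition "RR x = f1 (r x) * phi1 (T x) - f1 x * phi1 (r1 x)"
definition "NN x = h1 (DD x) + phi1 (r1 x) / T x ^ mm"
definition "NN' x = h2 (DD x) * DD' x + (phi2 (r1 x) * r2 x * T x ^ mm - phi1 (r1 x) * (real mm * T x ^ (mm - 1) * T' x)) / (T x ^ mm)^2"

lemma DD_pos: assumes "0 < x" "x \<le> 1" shows "DD x > 0"
  unfolding DD_def using r1_pos[OF assms] T_pos[OF assms] by simp

lemma DD_at: assumes "0 < x" "x < 1" shows "(DD has_real_derivative DD' x) (at x)"
proof -
  have "((\<lambda>y. T y ^ mm) has_real_derivative (real mm * T x ^ (mm - Suc 0) * T' x)) (at x)"
    using DERIV_power[OF T_at[OF assms], of mm] by (simp add: algebra_simps)
  from DERIV_mult[OF r1_deriv[OF assms] this]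
  show ?thesis unfolding DD_def[abs_def] DD'_def by (simp add: algebra_simps)
qed

lemma NN_at: assumes "0 < x" "x < 1" shows "(NN has_real_derivative NN' x) (at x)"
proof -
  have x1: "x \<le> 1" using assms by simp
  have Tp: "T x ^ mm > 0" using T_pos[OF assms(1) x1] by simp
  have d1: "((\<lambda>y. h1 (DD y)) has_real_derivative h2 (DD x) * DD' x) (at x)"
    by (rule DERIV_chain2[OF h1_deriv DD_at[OF assms]]) (rule DD_pos[OF assms(1) x1])
  have d2: "((\<lambda>y. phi1 (r1 y)) has_real_derivative phi2 (r1 x) * r2 x) (at x)"
    by (rule DERIV_chain2[OF phi1_deriv r1_deriv[OF assms]]) (rule r1_pos[OF assms(1) x1])
  have d3: "((\<lambda>y. T y ^ mm) has_real_derivative (real mm * T x ^ (mm - Suc 0) * T' x)) (at x)"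
    using DERIV_power[OF T_at[OF assms], of mm] by (simp add: algebra_simps)
  have d4: "((\<lambda>y. phi1 (r1 y) / T y ^ mm) has_real_derivative
     (phi2 (r1 x) * r2 x * T x ^ mm - phi1 (r1 x) * (real mm * T x ^ (mm - Suc 0) * T' x)) / (T x ^ mm * T x ^ mm)) (at x)"
    by (rule DERIV_divide[OF d2 d3]) (use Tp in linarith)
  show ?thesis unfolding NN_def[abs_def] NN'_def
    using DERIV_add[OF d1 d4] by (simp add: power2_eq_square)
qed

lemma NN_ident: assumes "0 < x" "x < 1"
  shows "f x * T x ^ mm * NN' x = real mm * RR x - real mm * f x * phi1 (r1 x) * T' x * T x ^ (mm - 1) / T x ^ mm"
proof -
  have x1: "x \<le> 1" using assms by simp
  have Tp: "T x ^ mm > 0" using T_pos[OF assms(1) x1] by simp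
  have e1: "T x ^ (2 * mm) = (T x ^ mm)^2" by (simp add: power_mult[symmetric] mult.commute)
  have "2 * n - 3 = mm + (mm - 1)" using n2 by (simp add: mm_def)
  hence e2: "T x ^ (2 * n - 3) = T x ^ mm * T x ^ (mm - 1)" by (simp add: power_add)
  have e3: "f1 (r x) * r1 x - f1 x * T x = f x * T' x"
    unfolding T'_def using f_x_pos[OF assms(1) x1] by simp
  have ode: "f x * (phi2 (r1 x) + h2 (DD x) * (T x ^ mm)^2) * r2 x
     = real mm * RR x - real mm * (f x * T' x) * h2 (DD x) * r1 x * (T x ^ mm * T x ^ (mm - 1))"
  proof -
    have "f x * (phi2 (r1 x) + h2 (r1 x * T x ^ mm) * T x ^ (2 * mm)) * r2 x
       = real mm * (f1 (r x) * phi1 (T x) - f1 x * phi1 (r1 x))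
         - real mm * (f1 (r x) * r1 x - f1 x * T x) * h2 (r1 x * T x ^ mm) * r1 x * T x ^ (2 * n - 3)"
      using r_ode[OF assms] unfolding mm_def by simp
    thus ?thesis unfolding e1 e2 e3 DD_def RR_def by simp
  qed
  show ?thesis
    unfolding NN'_def DD'_def
    using alg_ode[OF Tp ode, of "phi1 (r1 x)"] by (simp add: algebra_simps)
qed

lemma setup_facts:
  assumes r0: "0 < \<rho>0" "\<rho>0 \<le> 1" and x: "0 < x" "x \<le> \<rho>0"
  shows "0 < r x" "r x \<le> r \<rho>0" "r \<rho>0 \<le> LL" "0 < r \<rho>0"
    "b0 f1 \<rho>0 \<le> f1 x" "f1 x \<le> b1 f1 \<rho>0" "b0 f1 (r \<rho>0) \<le> f1 (r x)" "f1 (r x) \<le> b1 f1 (r \<rho>0)"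
    "0 < b0 f1 \<rho>0" "0 < b0 f1 (r \<rho>0)" "b0 f1 \<rho>0 \<le> 1" "1 \<le> b1 f1 \<rho>0"
    "b0 f1 (r \<rho>0) \<le> 1" "1 \<le> b1 f1 (r \<rho>0)"
    "0 < r1 x" "0 < T x" "0 < f x"
proof -
  have x1: "x \<le> 1" using x r0 by simp
  show rx: "0 < r x" using r_pos[OF x(1) x1] .
  show "r x \<le> r \<rho>0" using r_mono[of x \<rho>0] x r0 by (cases "x = \<rho>0") auto
  show "r \<rho>0 \<le> LL" "0 < r \<rho>0" using r_LL[OF r0] by auto
  show "b0 f1 \<rho>0 \<le> f1 x" "f1 x \<le> b1 f1 \<rho>0" using b0_le[of x \<rho>0] b1_ge[of x \<rho>0] x by auto
  show "b0 f1 (r \<rho>0) \<le> f1 (r x)" "f1 (r x) \<le> b1 f1 (r \<rho>0)"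
    using b0_le[of "r x" "r \<rho>0"] b1_ge[of "r x" "r \<rho>0"] rx \<open>r x \<le> r \<rho>0\<close> by auto
  show "0 < b0 f1 \<rho>0" using b0_pos[of \<rho>0] r0 LL_ge by auto
  show "0 < b0 f1 (r \<rho>0)" using b0_pos[of "r \<rho>0"] r_LL[OF r0] by auto
  show "b0 f1 \<rho>0 \<le> 1" "1 \<le> b1 f1 \<rho>0" using b_bounds[of \<rho>0] r0 by auto
  show "b0 f1 (r \<rho>0) \<le> 1" "1 \<le> b1 f1 (r \<rho>0)" using b_bounds[of "r \<rho>0"] r_LL[OF r0] by auto
  show "0 < r1 x" using r1_pos[OF x(1) x1] .
  show "0 < T x" using T_pos[OF x(1) x1] .
  show "0 < f x" using f_x_pos[OF x(1) x1] .
qed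

lemma up_pt:
  assumes r0: "0 < \<rho>0" "\<rho>0 \<le> 1" and x: "0 < x" "x \<le> \<rho>0"
    and g: "GG x > alpha1 f1 phi1 t0 \<rho>0 (r \<rho>0)"
  shows "RR x \<le> 0 \<and> (RR x = 0 \<longrightarrow> phi1 (r1 x) = 0) \<and> (x < 1 \<longrightarrow> T' x > 0)"
proof -
  note sf = setup_facts[OF r0 x]
  define B0 where "B0 = b0 f1 \<rho>0"
  define B1 where "B1 = b1 f1 \<rho>0"
  define C0 where "C0 = b0 f1 (r \<rho>0)"
  define C1 where "C1 = b1 f1 (r \<rho>0)"
  define u where "u = r1 x"
  define t where "t = T x"
  define gg where "gg = u / t"
  define y1 where "y1 = B0 / C1"
  have fx: "B0 \<le> f1 x" "f1 x \<le> B1" "C0 \<le> f1 (r x)" "f1 (r x) \<le> C1"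
    "0 < B0" "0 < C0" "B0 \<le> 1" "1 \<le> B1" "C0 \<le> 1" "1 \<le> C1"
    using sf by (auto simp: B0_def B1_def C0_def C1_def)
  have ut: "0 < u" "0 < t" "0 < f x" using sf by (auto simp: u_def t_def)
  have u_eq: "u = gg * t" using ut by (simp add: gg_def)
  have y1: "0 < y1" "y1 \<le> 1" using fx by (auto simp: y1_def)
  obtain qi where qi: "qi = q1_inv phi1 t0 y1" by blast
  have qi1: "qi \<ge> 1" "Q1 qi = y1" using Q1_inv[OF y1] qi by auto
  have gA: "gg > B1 / C0" "gg > qi"
    using g unfolding alpha1_def GG_def gg_def u_def t_def B1_def C0_def qi y1_def B0_def C1_def
    by auto
  have "B1 / C0 \<ge> 1" using fx by simp
  hence g1: "gg > 1" using gA by linarith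
  have gC: "gg * C0 > B1" using gA fx by (simp add: divide_less_eq)
  have Tpos: "T' x > 0" if "x < 1"
  proof -
    have "f1 (r x) * u \<ge> C0 * u" using fx ut by (intro mult_right_mono) auto
    moreover have "f1 x * t \<le> B1 * t" using fx ut by (intro mult_right_mono) auto
    moreover have "C0 * u - B1 * t = t * (gg * C0 - B1)" by (simp add: u_eq algebra_simps)
    moreover have "t * (gg * C0 - B1) > 0" using ut gC by simp
    ultimately have "f1 (r x) * u - f1 x * t > 0" by linarith
    thus ?thesis unfolding T'_def u_def t_def using ut by simp
  qed
  have ugt: "u > t" using u_eq g1 ut by (simp add: mult_less_cancel_right1)
  have R: "RR x \<le> 0 \<and> (RR x = 0 \<longrightarrow> phi1 u = 0)"
  proof (cases "t > t0")
    case True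
    have ut0: "u > t0" using True ugt by linarith
    have pu: "phi1 u \<ge> 0" using phi1_nonneg[OF ut0] .
    have pt: "phi1 t \<ge> 0" using phi1_nonneg[OF True] .
    have ptu: "phi1 t \<le> phi1 u" using phi1_mono[of t u] ut ugt by simp
    show ?thesis
    proof (cases "phi1 u > 0")
      case True
      have "phi1 t / phi1 (gg * t) \<le> Q1 gg" using Q1_upper[of gg t] g1 \<open>t > t0\<close> by simp
      hence "phi1 t \<le> Q1 gg * phi1 u" using True u_eq by (simp add: divide_le_eq)
      moreover have "Q1 gg < y1" using Q1_strict[of qi gg] qi1 gA by simp
      ultimately have "phi1 t < y1 * phi1 u" using True by (smt (verit) mult_strict_right_mono)
      hence "C1 * phi1 t < C1 * (y1 * phi1 u)" using fx by simp
      also have "C1 * (y1 * phi1 u) = B0 * phi1 u" using fx by (simp add: y1_def)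
      also have "\<dots> \<le> f1 x * phi1 u" using fx True by (intro mult_right_mono) auto
      finally have "C1 * phi1 t < f1 x * phi1 u" .
      moreover have "f1 (r x) * phi1 t \<le> C1 * phi1 t" using fx pt by (intro mult_right_mono) auto
      ultimately have "RR x < 0" unfolding RR_def u_def[symmetric] t_def[symmetric] by linarith
      thus ?thesis by simp
    next
      case False
      hence "phi1 u = 0" "phi1 t = 0" using pu pt ptu by auto
      thus ?thesis unfolding RR_def u_def[symmetric] t_def[symmetric] by simp
    qed
  next
    case False
    hence pt: "phi1 t \<le> 0" using phi1_nonpos[of t] ut by simp
    show ?thesis
    proof (cases "u > t0")
      case True
      have pu: "phi1 u \<ge> 0" using phi1_nonneg[OF True] .
      have a: "f1 (r x) * phi1 t \<le> 0" using pt fx by (simp add: mult_nonneg_nonpos)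
      have b: "f1 x * phi1 u \<ge> 0" using pu fx by simp
      have "RR x = f1 (r x) * phi1 t - f1 x * phi1 u" unfolding RR_def u_def t_def ..
      hence "RR x \<le> 0" and "RR x = 0 \<longrightarrow> f1 x * phi1 u = 0" using a b by auto
      moreover have "f1 x > 0" using fx by simp
      ultimately show ?thesis by simp
    next
      case False
      have pu: "phi1 u \<le> 0" using phi1_nonpos[of u] False ut by simp
      have "t * phi1 t \<le> u * phi1 u" using A5 ut ugt unfolding mono_on_def by simp
      hence "t * phi1 t \<le> t * (gg * phi1 u)" using u_eq by (simp add: algebra_simps)
      hence pt2: "phi1 t \<le> gg * phi1 u" using ut by simp
      have "f1 (r x) * phi1 t \<le> f1 (r x) * (gg * phi1 u)" using pt2 fx by (intro mult_left_mono) auto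
      hence R1: "RR x \<le> (f1 (r x) * gg - f1 x) * phi1 u"
        unfolding RR_def u_def[symmetric] t_def[symmetric] by (simp add: algebra_simps)
      have "f1 (r x) * gg \<ge> C0 * gg" using fx g1 by (intro mult_right_mono) auto
      hence K: "f1 (r x) * gg - f1 x > 0" using gC fx by (simp add: mult.commute)
      have "(f1 (r x) * gg - f1 x) * phi1 u \<le> 0" using K pu by (simp add: mult_nonneg_nonpos)
      moreover have "RR x = 0 \<longrightarrow> phi1 u = 0"
      proof
        assume "RR x = 0"
        hence "(f1 (r x) * gg - f1 x) * phi1 u \<ge> 0" using R1 by simp
        hence "phi1 u \<ge> 0" using K by (simp add: zero_le_mult_iff)
        thus "phi1 u = 0" using pu by simp
      qed
      ultimately show ?thesis using R1 by simp
    qed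
  qed
  show ?thesis using R Tpos by (simp add: u_def)
qed

lemma lo_pt:
  assumes r0: "0 < \<rho>0" "\<rho>0 \<le> 1" and x: "0 < x" "x \<le> \<rho>0"
    and g: "GG x < alpha0 f1 phi1 t0 \<rho>0 (r \<rho>0)"
  shows "RR x \<ge> 0 \<and> (RR x = 0 \<longrightarrow> phi1 (r1 x) = 0) \<and> (x < 1 \<longrightarrow> T' x < 0)"
proof -
  note sf = setup_facts[OF r0 x]
  define B0 where "B0 = b0 f1 \<rho>0"
  define B1 where "B1 = b1 f1 \<rho>0"
  define C0 where "C0 = b0 f1 (r \<rho>0)"
  define C1 where "C1 = b1 f1 (r \<rho>0)"
  define u where "u = r1 x"
  define t where "t = T x"
  define gg where "gg = u / t"
  define y0 where "y0 = B1 / C0"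
  have fx: "B0 \<le> f1 x" "f1 x \<le> B1" "C0 \<le> f1 (r x)" "f1 (r x) \<le> C1"
    "0 < B0" "0 < C0" "B0 \<le> 1" "1 \<le> B1" "C0 \<le> 1" "1 \<le> C1"
    using sf by (auto simp: B0_def B1_def C0_def C1_def)
  have ut: "0 < u" "0 < t" "0 < f x" using sf by (auto simp: u_def t_def)
  have u_eq: "u = gg * t" using ut by (simp add: gg_def)
  have gpos: "gg > 0" using ut by (simp add: gg_def)
  have y0: "1 \<le> y0" using fx by (auto simp: y0_def)
  obtain qi where qi: "qi = q0_inv phi1 t0 y0" by blast
  have qi1: "0 < qi" "qi \<le> 1" "Q0 qi = y0" using Q0_inv[OF y0] qi by auto
  have gA: "gg < B0 / C1" "gg < qi"
    using g unfolding alpha0_def GG_def gg_def u_def t_def B1_def C0_def qi y0_def B0_def C1_def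
    by auto
  have "B0 / C1 \<le> 1" using fx by simp
  hence g1: "gg < 1" using gA by linarith
  have gC: "gg * C1 < B0" using gA fx by (simp add: less_divide_eq)
  have Tneg: "T' x < 0" if "x < 1"
  proof -
    have "f1 (r x) * u \<le> C1 * u" using fx ut by (intro mult_right_mono) auto
    moreover have "f1 x * t \<ge> B0 * t" using fx ut by (intro mult_right_mono) auto
    moreover have "C1 * u - B0 * t = t * (gg * C1 - B0)" by (simp add: u_eq algebra_simps)
    moreover have "t * (gg * C1 - B0) < 0" using ut gC by (simp add: mult_pos_neg)
    ultimately have "f1 (r x) * u - f1 x * t < 0" by linarith
    thus ?thesis unfolding T'_def u_def t_def using ut by (simp add: divide_less_0_iff)
  qed
  have ult: "u < t" using u_eq g1 ut by (simp add: mult_less_cancel_right1)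
  have R: "RR x \<ge> 0 \<and> (RR x = 0 \<longrightarrow> phi1 u = 0)"
  proof (cases "u > t0")
    case True
    have tt0: "t > t0" using True ult by linarith
    have pu: "phi1 u \<ge> 0" using phi1_nonneg[OF True] .
    have pt: "phi1 t \<ge> 0" using phi1_nonneg[OF tt0] .
    show ?thesis
    proof (cases "phi1 u > 0")
      case True
      have "t > t0 / gg" using \<open>u > t0\<close> u_eq gpos by (simp add: divide_less_eq mult.commute)
      hence "Q0 gg \<le> phi1 t / phi1 (gg * t)" using Q0_lower[of gg t] gpos g1 by simp
      hence "Q0 gg * phi1 u \<le> phi1 t" using True u_eq by (simp add: le_divide_eq)
      moreover have "Q0 gg > y0" using Q0_strict[of gg qi] qi1 gA gpos by simp
      ultimately have "phi1 t > y0 * phi1 u" using True by (smt (verit) mult_strict_right_mono)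
      hence "C0 * phi1 t > C0 * (y0 * phi1 u)" using fx by simp
      moreover have "C0 * (y0 * phi1 u) = B1 * phi1 u" using fx by (simp add: y0_def)
      moreover have "B1 * phi1 u \<ge> f1 x * phi1 u" using fx True by (intro mult_right_mono) auto
      moreover have "f1 (r x) * phi1 t \<ge> C0 * phi1 t" using fx pt by (intro mult_right_mono) auto
      ultimately have "RR x > 0" unfolding RR_def u_def[symmetric] t_def[symmetric] by linarith
      thus ?thesis by simp
    next
      case False
      hence pu0: "phi1 u = 0" using pu by auto
      have "f1 (r x) * phi1 t \<ge> 0" using pt fx by simp
      thus ?thesis unfolding RR_def u_def[symmetric] t_def[symmetric] using pu0 by simp
    qed
  next
    case False
    have pu: "phi1 u \<le> 0" using phi1_nonpos[of u] False ut by simp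
    show ?thesis
    proof (cases "t > t0")
      case True
      have pt: "phi1 t \<ge> 0" using phi1_nonneg[OF True] .
      have a: "f1 (r x) * phi1 t \<ge> 0" using pt fx by simp
      have b: "f1 x * phi1 u \<le> 0" using pu fx by (simp add: mult_nonneg_nonpos)
      have "RR x = f1 (r x) * phi1 t - f1 x * phi1 u" unfolding RR_def u_def t_def ..
      hence "RR x \<ge> 0" and "RR x = 0 \<longrightarrow> f1 x * phi1 u = 0" using a b by auto
      moreover have "f1 x > 0" using fx by simp
      ultimately show ?thesis by simp
    next
      case False
      have "u * phi1 u \<le> t * phi1 t" using A5 ut ult unfolding mono_on_def by simp
      hence "t * (gg * phi1 u) \<le> t * phi1 t" using u_eq by (simp add: algebra_simps)
      hence pt2: "gg * phi1 u \<le> phi1 t" using ut by simp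
      have "f1 (r x) * (gg * phi1 u) \<le> f1 (r x) * phi1 t" using pt2 fx by (intro mult_left_mono) auto
      hence R1: "RR x \<ge> (f1 (r x) * gg - f1 x) * phi1 u"
        unfolding RR_def u_def[symmetric] t_def[symmetric] by (simp add: algebra_simps)
      have "f1 (r x) * gg \<le> C1 * gg" using fx gpos by (intro mult_right_mono) auto
      hence K: "f1 (r x) * gg - f1 x < 0" using gC fx by (simp add: mult.commute)
      have "(f1 (r x) * gg - f1 x) * phi1 u \<ge> 0" using K pu by (simp add: mult_nonpos_nonpos)
      moreover have "RR x = 0 \<longrightarrow> phi1 u = 0"
      proof
        assume "RR x = 0"
        hence "(f1 (r x) * gg - f1 x) * phi1 u \<le> 0" using R1 by simp
        hence "phi1 u \<ge> 0" using K by (simp add: mult_le_0_iff)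
        thus "phi1 u = 0" using pu by simp
      qed
      ultimately show ?thesis using R1 by simp
    qed
  qed
  show ?thesis using R Tneg by (simp add: u_def)
qed

lemma ode_form: assumes "0 < x" "x < 1"
  shows "f x * (phi2 (r1 x) + h2 (DD x) * (T x ^ mm)^2) * r2 x
     = real mm * RR x - real mm * (f x * T' x) * h2 (DD x) * r1 x * (T x ^ mm * T x ^ (mm - 1))"
proof -
  have x1: "x \<le> 1" using assms by simp
  have e1: "T x ^ (2 * mm) = (T x ^ mm)^2" by (simp add: power_mult[symmetric] mult.commute)
  have "2 * n - 3 = mm + (mm - 1)" using n2 by (simp add: mm_def)
  hence e2: "T x ^ (2 * n - 3) = T x ^ mm * T x ^ (mm - 1)" by (simp add: power_add)
  have e3: "f1 (r x) * r1 x - f1 x * T x = f x * T' x"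
    unfolding T'_def using f_x_pos[OF assms(1) x1] by simp
  have "f x * (phi2 (r1 x) + h2 (r1 x * T x ^ mm) * T x ^ (2 * mm)) * r2 x
     = real mm * (f1 (r x) * phi1 (T x) - f1 x * phi1 (r1 x))
       - real mm * (f1 (r x) * r1 x - f1 x * T x) * h2 (r1 x * T x ^ mm) * r1 x * T x ^ (2 * n - 3)"
    using r_ode[OF assms] unfolding mm_def by simp
  thus ?thesis unfolding e1 e2 e3 DD_def RR_def by simp
qed

lemma NN'_sign:
  assumes "0 < z" "z < 1"
  shows "real mm * RR z - real mm * f z * phi1 (r1 z) * T' z * T z ^ (mm - 1) / T z ^ mm \<le> 0 \<Longrightarrow> NN' z \<le> 0"
    and "real mm * RR z - real mm * f z * phi1 (r1 z) * T' z * T z ^ (mm - 1) / T z ^ mm \<ge> 0 \<Longrightarrow> NN' z \<ge> 0"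
proof -
  have z1: "z \<le> 1" using assms by simp
  have p: "f z * T z ^ mm > 0" using f_x_pos[OF assms(1) z1] T_pos[OF assms(1) z1] by simp
  show "real mm * RR z - real mm * f z * phi1 (r1 z) * T' z * T z ^ (mm - 1) / T z ^ mm \<le> 0 \<Longrightarrow> NN' z \<le> 0"
    using NN_ident[OF assms] p by (metis mult_le_0_iff not_less)
  show "real mm * RR z - real mm * f z * phi1 (r1 z) * T' z * T z ^ (mm - 1) / T z ^ mm \<ge> 0 \<Longrightarrow> NN' z \<ge> 0"
    using NN_ident[OF assms] p by (metis zero_le_mult_iff not_less)
qed

lemma NN_cont: assumes "0 < a" "b < 1" shows "continuous_on {a..b} NN"
proof (rule continuous_at_imp_continuous_on, rule ballI)
  fix z assume "z \<in> {a..b}"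
  thus "isCont NN z" using NN_at[of z] assms by (auto intro: DERIV_isCont)
qed

lemma r1_cont_on: assumes "0 < a" "b \<le> 1" shows "continuous_on {a..b} r1"
  by (rule continuous_on_subset[OF r1_cont]) (use assms in auto)

lemma T_cont_on: assumes "0 < a" "b \<le> 1" shows "continuous_on {a..b} T"
  by (rule continuous_on_subset[OF T_cont]) (use assms in auto)

lemma up_r2:
  assumes r0: "0 < \<rho>0" "\<rho>0 \<le> 1" and a: "0 \<le> a" "a < \<rho>0"
    and reg: "\<And>z. a < z \<Longrightarrow> z \<le> \<rho>0 \<Longrightarrow> GG z > alpha1 f1 phi1 t0 \<rho>0 (r \<rho>0)"
    and y: "a < y" "y < \<rho>0"
  shows "r2 y \<le> 0"
proof (rule ccontr)
  assume "\<not> r2 y \<le> 0"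
  hence r2p: "r2 y > 0" by simp
  have y0: "0 < y" "y < 1" "y \<le> 1" using y a r0 by auto
  have pty: "RR y \<le> 0 \<and> (RR y = 0 \<longrightarrow> phi1 (r1 y) = 0) \<and> (y < 1 \<longrightarrow> T' y > 0)"
    using up_pt[OF r0 y0(1)] reg[of y] y by auto
  have Ty: "T y > 0" "T' y > 0" using T_pos[OF y0(1,3)] pty y0 by auto
  have fy: "f y > 0" using f_x_pos[OF y0(1,3)] .
  have r1y: "r1 y > 0" using r1_pos[OF y0(1,3)] .
  have h2y: "h2 (DD y) \<ge> 0" using h2_nonneg DD_pos[OF y0(1,3)] by auto
  have "0 \<le> f y * (phi2 (r1 y) + h2 (DD y) * (T y ^ mm)^2) * r2 y"
    using fy phi2_nonneg[OF r1y] h2y r2p by simp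
  moreover have "0 \<le> real mm * (f y * T' y) * h2 (DD y) * r1 y * (T y ^ mm * T y ^ (mm - 1))"
    using fy Ty h2y r1y by simp
  ultimately have "real mm * RR y \<ge> 0" using ode_form[OF y0(1,2)] by linarith
  hence "RR y \<ge> 0" using mm_pos by (simp add: zero_le_mult_iff)
  hence "RR y = 0" using pty by simp
  hence p0: "phi1 (r1 y) = 0" using pty by simp
  have "DD' y > 0" unfolding DD'_def using r2p Ty r1y mm_pos
    by (intro add_pos_nonneg) auto
  then obtain d1 where d1: "d1 > 0" "\<And>h. h > 0 \<Longrightarrow> h < d1 \<Longrightarrow> DD y < DD (y + h)"
    using DERIV_pos_inc_right[OF DD_at[OF y0(1,2)]] by blast
  obtain d2 where d2: "d2 > 0" "\<And>h. h > 0 \<Longrightarrow> h < d2 \<Longrightarrow> r1 y < r1 (y + h)"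
    using DERIV_pos_inc_right[OF r1_deriv[OF y0(1,2)] r2p] by blast
  define hh where "hh = min (min (d1/2) (d2/2)) ((\<rho>0 - y)/2)"
  have hha: "hh \<le> d1/2" unfolding hh_def by (meson min.cobounded1 order_trans)
  have hhb: "hh \<le> d2/2" unfolding hh_def by (meson min.cobounded1 min.cobounded2 order_trans)
  have hhc: "hh \<le> (\<rho>0 - y)/2" unfolding hh_def by (rule min.cobounded2)
  note hh1 = hha hhb hhc
  have hh0: "hh > 0" unfolding hh_def using d1 d2 y by auto
  have hhy: "y + hh < \<rho>0" using hh1 y by (simp add: field_simps)
  have "NN (y + hh) \<le> NN y"
  proof (rule DERIV_nonpos_imp_decreasing_open[of y "y + hh" NN])
    show "y \<le> y + hh" using hh0 by simp
    show "continuous_on {y..y + hh} NN" using NN_cont[of y "y + hh"] y0 hhy r0 by simp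
    fix z assume z: "y < z" "z < y + hh"
    have z0: "0 < z" "z < 1" "z \<le> 1" using z y0 hhy r0 by auto
    have ptz: "RR z \<le> 0 \<and> (RR z = 0 \<longrightarrow> phi1 (r1 z) = 0) \<and> (z < 1 \<longrightarrow> T' z > 0)"
      using up_pt[OF r0 z0(1)] reg[of z] z y hhy by auto
    have "r1 y < r1 (y + (z - y))" using d2(2)[of "z - y"] z hh1 by simp
    hence "phi1 (r1 y) \<le> phi1 (r1 z)" using phi1_mono[OF r1y] by simp
    hence pz: "phi1 (r1 z) \<ge> 0" using p0 by simp
    have "0 \<le> real mm * f z * phi1 (r1 z) * T' z * T z ^ (mm - 1) / T z ^ mm"
      using pz ptz z0 f_x_pos[OF z0(1,3)] T_pos[OF z0(1,3)] by simp
    moreover have "real mm * RR z \<le> 0" using ptz by (simp add: mult_nonneg_nonpos)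
    ultimately have "NN' z \<le> 0" using NN'_sign(1)[OF z0(1,2)] by linarith
    thus "\<exists>y. (NN has_real_derivative y) (at z) \<and> y \<le> 0" using NN_at[OF z0(1,2)] by blast
  qed
  moreover have "NN y = h1 (DD y)" unfolding NN_def using p0 by simp
  moreover have "NN (y + hh) \<ge> h1 (DD (y + hh))"
  proof -
    have "r1 y < r1 (y + hh)" using d2(2)[of hh] hh0 hh1 d2(1) by simp
    hence "phi1 (r1 (y + hh)) \<ge> 0" using phi1_mono[OF r1y] p0 by fastforce
    moreover have "T (y + hh) > 0" using T_pos[of "y + hh"] y0 hh0 hhy r0 by simp
    ultimately show ?thesis unfolding NN_def by simp
  qed
  moreover have "h1 (DD y) < h1 (DD (y + hh))"
    using h1_strict[OF DD_pos[OF y0(1,3)]] d1(2)[of hh] hh0 hh1 d1(1) by simp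
  ultimately show False by simp
qed

lemma lo_r2:
  assumes r0: "0 < \<rho>0" "\<rho>0 \<le> 1" and a: "0 \<le> a" "a < \<rho>0"
    and reg: "\<And>z. a < z \<Longrightarrow> z \<le> \<rho>0 \<Longrightarrow> GG z < alpha0 f1 phi1 t0 \<rho>0 (r \<rho>0)"
    and y: "a < y" "y < \<rho>0"
  shows "r2 y \<ge> 0"
proof (rule ccontr)
  assume "\<not> r2 y \<ge> 0"
  hence r2n: "r2 y < 0" by simp
  have y0: "0 < y" "y < 1" "y \<le> 1" using y a r0 by auto
  have pty: "RR y \<ge> 0 \<and> (RR y = 0 \<longrightarrow> phi1 (r1 y) = 0) \<and> (y < 1 \<longrightarrow> T' y < 0)"
    using lo_pt[OF r0 y0(1)] reg[of y] y by auto
  have Ty: "T y > 0" "T' y < 0" using T_pos[OF y0(1,3)] pty y0 by auto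
  have fy: "f y > 0" using f_x_pos[OF y0(1,3)] .
  have r1y: "r1 y > 0" using r1_pos[OF y0(1,3)] .
  have h2y: "h2 (DD y) \<ge> 0" using h2_nonneg DD_pos[OF y0(1,3)] by auto
  have "f y * (phi2 (r1 y) + h2 (DD y) * (T y ^ mm)^2) * r2 y \<le> 0"
    using fy phi2_nonneg[OF r1y] h2y r2n by (simp add: mult_nonneg_nonpos)
  moreover have "real mm * (f y * T' y) * h2 (DD y) * r1 y * (T y ^ mm * T y ^ (mm - 1)) \<le> 0"
  proof -
    have "f y * T' y \<le> 0" using fy Ty by (simp add: mult_nonneg_nonpos)
    moreover have "0 \<le> h2 (DD y) * r1 y * (T y ^ mm * T y ^ (mm - 1))" using h2y r1y Ty by simp
    ultimately have "(f y * T' y) * (h2 (DD y) * r1 y * (T y ^ mm * T y ^ (mm - 1))) \<le> 0"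
      by (simp add: mult_nonpos_nonneg)
    thus ?thesis by (simp add: mult_nonneg_nonpos mult.assoc)
  qed
  ultimately have "real mm * RR y \<le> 0" using ode_form[OF y0(1,2)] by linarith
  hence "RR y \<le> 0" using mm_pos by (simp add: mult_le_0_iff)
  hence "RR y = 0" using pty by simp
  hence p0: "phi1 (r1 y) = 0" using pty by simp
  have "DD' y < 0"
  proof -
    have "r2 y * T y ^ mm < 0" using r2n Ty by (simp add: mult_neg_pos)
    moreover have "r1 y * (real mm * T y ^ (mm - 1) * T' y) \<le> 0"
      using r1y Ty mm_pos by (simp add: mult_nonneg_nonpos)
    ultimately show ?thesis unfolding DD'_def by linarith
  qed
  then obtain d1 where d1: "d1 > 0" "\<And>h. h > 0 \<Longrightarrow> h < d1 \<Longrightarrow> DD y < DD (y - h)"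
    using DERIV_neg_dec_left[OF DD_at[OF y0(1,2)]] by blast
  obtain d2 where d2: "d2 > 0" "\<And>h. h > 0 \<Longrightarrow> h < d2 \<Longrightarrow> r1 y < r1 (y - h)"
    using DERIV_neg_dec_left[OF r1_deriv[OF y0(1,2)] r2n] by blast
  define hh where "hh = min (min (d1/2) (d2/2)) ((y - a)/2)"
  have hha: "hh \<le> d1/2" unfolding hh_def by (meson min.cobounded1 order_trans)
  have hhb: "hh \<le> d2/2" unfolding hh_def by (meson min.cobounded1 min.cobounded2 order_trans)
  have hhc: "hh \<le> (y - a)/2" unfolding hh_def by (rule min.cobounded2)
  note hh1 = hha hhb hhc
  have hh0: "hh > 0" unfolding hh_def using d1 d2 y by auto
  have hhy: "y - hh > a" using hh1 y by (simp add: field_simps)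
  have "NN (y - hh) \<le> NN y"
  proof (rule DERIV_nonneg_imp_increasing_open[of "y - hh" y NN])
    show "y - hh \<le> y" using hh0 by simp
    show "continuous_on {y - hh..y} NN" using NN_cont[of "y - hh" y] y0 hhy a by simp
    fix z assume z: "y - hh < z" "z < y"
    have z0: "0 < z" "z < 1" "z \<le> 1" using z y0 hhy a by auto
    have ptz: "RR z \<ge> 0 \<and> (RR z = 0 \<longrightarrow> phi1 (r1 z) = 0) \<and> (z < 1 \<longrightarrow> T' z < 0)"
      using lo_pt[OF r0 z0(1)] reg[of z] z y hhy by auto
    have "r1 y < r1 (y - (y - z))" using d2(2)[of "y - z"] z hh1 by simp
    hence "phi1 (r1 y) \<le> phi1 (r1 z)" using phi1_mono[OF r1y] by simp
    hence pz: "phi1 (r1 z) \<ge> 0" using p0 by simp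
    have "real mm * f z * phi1 (r1 z) * T' z * T z ^ (mm - 1) / T z ^ mm \<le> 0"
    proof -
      have "real mm * f z * phi1 (r1 z) \<ge> 0" using pz mm_pos f_x_pos[OF z0(1,3)] by simp
      moreover have "T' z \<le> 0" using ptz z0 by simp
      ultimately have "real mm * f z * phi1 (r1 z) * T' z \<le> 0" by (simp add: mult_nonneg_nonpos)
      moreover have "T z ^ (mm - 1) / T z ^ mm \<ge> 0" using T_pos[OF z0(1,3)] by simp
      ultimately show ?thesis by (simp add: mult_nonpos_nonneg times_divide_eq_right[symmetric] del: times_divide_eq_right)
    qed
    moreover have "real mm * RR z \<ge> 0" using ptz by simp
    ultimately have "NN' z \<ge> 0" using NN'_sign(2)[OF z0(1,2)] by linarith
    thus "\<exists>y. (NN has_real_derivative y) (at z) \<and> y \<ge> 0" using NN_at[OF z0(1,2)] by blast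
  qed
  moreover have "NN y = h1 (DD y)" unfolding NN_def using p0 by simp
  moreover have "NN (y - hh) \<ge> h1 (DD (y - hh))"
  proof -
    have "r1 y < r1 (y - hh)" using d2(2)[of hh] hh0 hh1 d2(1) by simp
    hence "phi1 (r1 (y - hh)) \<ge> 0" using phi1_mono[OF r1y] p0 by fastforce
    moreover have "T (y - hh) > 0" using T_pos[of "y - hh"] y0 hh0 hhy a by simp
    ultimately show ?thesis unfolding NN_def by simp
  qed
  moreover have "h1 (DD y) < h1 (DD (y - hh))"
    using h1_strict[OF DD_pos[OF y0(1,3)]] d1(2)[of hh] hh0 hh1 d1(1) by simp
  ultimately show False by simp
qed

lemma GG_cont_on: assumes "0 < a" "b \<le> 1" shows "continuous_on {a..b} GG"
  unfolding GG_def[abs_def]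
proof (rule continuous_on_divide[OF r1_cont_on[OF assms] T_cont_on[OF assms]])
  show "\<forall>x\<in>{a..b}. T x \<noteq> 0"
  proof
    fix x assume "x \<in> {a..b}"
    hence "0 < x" "x \<le> 1" using assms by auto
    thus "T x \<noteq> 0" using T_pos[of x] by simp
  qed
qed

lemma Qf_lim: "((\<lambda>x. (f x / x) / (f (r x) / r x)) \<longlongrightarrow> 1) (at_right 0)"
proof -
  have ev: "eventually (\<lambda>x. r x > 0) (at_right 0)"
    using eventually_at_right_real[of 0 1] by (rule eventually_mono) (auto intro: r_pos)
  have "filterlim r (at_right 0) (at_right 0)"
    using tendsto_imp_filterlim_at_right[OF r_regular ev] .
  hence "((\<lambda>x. f (r x) / r x) \<longlongrightarrow> 1) (at_right 0)"
    using filterlim_compose[OF f_lim] by blast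
  from tendsto_divide[OF f_lim this] show ?thesis by simp
qed

lemma GG_le_Qf: assumes "0 < x" "x \<le> 1" "x * r1 x \<le> r x"
  shows "GG x \<le> (f x / x) / (f (r x) / r x)"
proof -
  have p: "r x > 0" "f (r x) > 0" "f x > 0" using r_LL[OF assms(1,2)] f_pos[of "r x"] f_x_pos[OF assms(1,2)] by auto
  have "GG x = r1 x * f x / f (r x)" unfolding GG_def tau_def using p by simp
  also have "\<dots> \<le> (r x / x) * f x / f (r x)"
    using assms p by (intro divide_right_mono mult_right_mono) (auto simp: pos_le_divide_eq mult.commute)
  also have "\<dots> = (f x / x) / (f (r x) / r x)" by simp
  finally show ?thesis .
qed

lemma Qf_le_GG: assumes "0 < x" "x \<le> 1" "r x \<le> x * r1 x"
  shows "(f x / x) / (f (r x) / r x) \<le> GG x"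
proof -
  have p: "r x > 0" "f (r x) > 0" "f x > 0" using r_LL[OF assms(1,2)] f_pos[of "r x"] f_x_pos[OF assms(1,2)] by auto
  have "(f x / x) / (f (r x) / r x) = (r x / x) * f x / f (r x)" by simp
  also have "\<dots> \<le> r1 x * f x / f (r x)"
    using assms p by (intro divide_right_mono mult_right_mono) (auto simp: pos_divide_le_eq mult.commute)
  also have "\<dots> = GG x" unfolding GG_def tau_def using p by simp
  finally show ?thesis .
qed

lemma up_mono:
  assumes r0: "0 < \<rho>0" "\<rho>0 \<le> 1" and a: "0 \<le> a" "a < \<rho>0"
    and reg: "\<And>z. a < z \<Longrightarrow> z \<le> \<rho>0 \<Longrightarrow> GG z > alpha1 f1 phi1 t0 \<rho>0 (r \<rho>0)"
    and x: "a \<le> x" "0 < x" "x < \<rho>0"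
  shows "r1 \<rho>0 \<le> r1 x" "T x < T \<rho>0" "GG \<rho>0 < GG x"
proof -
  show r1m: "r1 \<rho>0 \<le> r1 x"
  proof (rule DERIV_nonpos_imp_decreasing_open[of x \<rho>0 r1])
    show "x \<le> \<rho>0" using x by simp
    show "continuous_on {x..\<rho>0} r1" using r1_cont_on x r0 by simp
    fix z assume z: "x < z" "z < \<rho>0"
    have "r2 z \<le> 0" using up_r2[OF r0 a reg] z x by auto
    moreover have "(r1 has_real_derivative r2 z) (at z)" using r1_deriv[of z] z x r0 by auto
    ultimately show "\<exists>y. (r1 has_real_derivative y) (at z) \<and> y \<le> 0" by blast
  qed
  show Tm: "T x < T \<rho>0"
  proof (rule DERIV_pos_imp_increasing_open[of x \<rho>0 T])
    show "x < \<rho>0" using x by simp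
    show "continuous_on {x..\<rho>0} T" using T_cont_on x r0 by simp
    fix z assume z: "x < z" "z < \<rho>0"
    have "T' z > 0" using up_pt[OF r0, of z] reg[of z] z x r0 by auto
    moreover have "(T has_real_derivative T' z) (at z)" using T_at[of z] z x r0 by auto
    ultimately show "\<exists>y. (T has_real_derivative y) (at z) \<and> 0 < y" by blast
  qed
  have p: "r1 \<rho>0 > 0" "T x > 0" using r1_pos[OF r0] T_pos[of x] x r0 by auto
  have "r1 \<rho>0 / T \<rho>0 < r1 \<rho>0 / T x" using p Tm by (simp add: divide_strict_left_mono)
  also have "\<dots> \<le> r1 x / T x" using r1m p by (simp add: divide_right_mono)
  finally show "GG \<rho>0 < GG x" unfolding GG_def .
qed

lemma lo_mono:
  assumes r0: "0 < \<rho>0" "\<rho>0 \<le> 1" and a: "0 \<le> a" "a < \<rho>0"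
    and reg: "\<And>z. a < z \<Longrightarrow> z \<le> \<rho>0 \<Longrightarrow> GG z < alpha0 f1 phi1 t0 \<rho>0 (r \<rho>0)"
    and x: "a \<le> x" "0 < x" "x < \<rho>0"
  shows "r1 x \<le> r1 \<rho>0" "T \<rho>0 < T x" "GG x < GG \<rho>0"
proof -
  show r1m: "r1 x \<le> r1 \<rho>0"
  proof (rule DERIV_nonneg_imp_increasing_open[of x \<rho>0 r1])
    show "x \<le> \<rho>0" using x by simp
    show "continuous_on {x..\<rho>0} r1" using r1_cont_on x r0 by simp
    fix z assume z: "x < z" "z < \<rho>0"
    have "r2 z \<ge> 0" using lo_r2[OF r0 a reg] z x by auto
    moreover have "(r1 has_real_derivative r2 z) (at z)" using r1_deriv[of z] z x r0 by auto
    ultimately show "\<exists>y. (r1 has_real_derivative y) (at z) \<and> y \<ge> 0" by blast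
  qed
  show Tm: "T \<rho>0 < T x"
  proof (rule DERIV_neg_imp_decreasing_open[of x \<rho>0 T])
    show "x < \<rho>0" using x by simp
    show "continuous_on {x..\<rho>0} T" using T_cont_on x r0 by simp
    fix z assume z: "x < z" "z < \<rho>0"
    have "T' z < 0" using lo_pt[OF r0, of z] reg[of z] z x r0 by auto
    moreover have "(T has_real_derivative T' z) (at z)" using T_at[of z] z x r0 by auto
    ultimately show "\<exists>y. (T has_real_derivative y) (at z) \<and> y < 0" by blast
  qed
  have p: "r1 x > 0" "T \<rho>0 > 0" using r1_pos[of x] T_pos[OF r0] x r0 by auto
  have "r1 x / T x < r1 x / T \<rho>0" using p Tm by (simp add: divide_strict_left_mono)
  also have "\<dots> \<le> r1 \<rho>0 / T \<rho>0" using r1m p by (simp add: divide_right_mono)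
  finally show "GG x < GG \<rho>0" unfolding GG_def .
qed

lemma up_concave:
  assumes r0: "0 < \<rho>0" "\<rho>0 \<le> 1"
    and reg: "\<And>z. 0 < z \<Longrightarrow> z \<le> \<rho>0 \<Longrightarrow> GG z > alpha1 f1 phi1 t0 \<rho>0 (r \<rho>0)"
    and x: "0 < x" "x < \<rho>0"
  shows "x * r1 x \<le> r x"
proof -
  define w where "w = (\<lambda>e. r e - r1 x * e)"
  have wle: "w e \<le> w x" if e: "0 < e" "e < x" for e
  proof (rule DERIV_nonneg_imp_increasing_open[of e x w])
    show "e \<le> x" using e by simp
    show "continuous_on {e..x} w" unfolding w_def
      by (intro continuous_intros continuous_on_subset[OF r_cont]) (use e x r0 in auto)
    fix z assume z: "e < z" "z < x"
    have "r1 x \<le> r1 z"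
    proof (rule DERIV_nonpos_imp_decreasing_open[of z x r1])
      show "z \<le> x" using z by simp
      show "continuous_on {z..x} r1" using r1_cont_on[of z x] z e x r0 by simp
      fix y assume y: "z < y" "y < x"
      have "r2 y \<le> 0" using up_r2[of \<rho>0 0 y] r0 reg y z e x by auto
      moreover have "(r1 has_real_derivative r2 y) (at y)" using r1_deriv[of y] y z e x r0 by auto
      ultimately show "\<exists>d. (r1 has_real_derivative d) (at y) \<and> d \<le> 0" by blast
    qed
    moreover have "(w has_real_derivative (r1 z - r1 x * 1)) (at z)"
      unfolding w_def by (intro DERIV_diff DERIV_cmult DERIV_ident r_at) (use z e x r0 in auto)
    ultimately show "\<exists>y. (w has_real_derivative y) (at z) \<and> 0 \<le> y" by force
  qed
  have "(w \<longlongrightarrow> 0 - r1 x * 0) (at_right 0)"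
    unfolding w_def by (intro tendsto_intros r_regular)
  moreover have "eventually (\<lambda>e. w e \<le> w x) (at_right 0)"
    using eventually_at_right_real[of 0 x] x by (auto elim!: eventually_mono intro: wle)
  ultimately have "0 \<le> w x" using tendsto_upperbound[of w 0 "at_right 0" "w x"] by simp
  thus ?thesis by (simp add: w_def mult.commute)
qed

lemma lo_convex:
  assumes r0: "0 < \<rho>0" "\<rho>0 \<le> 1"
    and reg: "\<And>z. 0 < z \<Longrightarrow> z \<le> \<rho>0 \<Longrightarrow> GG z < alpha0 f1 phi1 t0 \<rho>0 (r \<rho>0)"
    and x: "0 < x" "x < \<rho>0"
  shows "r x \<le> x * r1 x"
proof -
  define w where "w = (\<lambda>e. r e - r1 x * e)"
  have wle: "w x \<le> w e" if e: "0 < e" "e < x" for e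
  proof (rule DERIV_nonpos_imp_decreasing_open[of e x w])
    show "e \<le> x" using e by simp
    show "continuous_on {e..x} w" unfolding w_def
      by (intro continuous_intros continuous_on_subset[OF r_cont]) (use e x r0 in auto)
    fix z assume z: "e < z" "z < x"
    have "r1 z \<le> r1 x"
    proof (rule DERIV_nonneg_imp_increasing_open[of z x r1])
      show "z \<le> x" using z by simp
      show "continuous_on {z..x} r1" using r1_cont_on[of z x] z e x r0 by simp
      fix y assume y: "z < y" "y < x"
      have "r2 y \<ge> 0" using lo_r2[of \<rho>0 0 y] r0 reg y z e x by auto
      moreover have "(r1 has_real_derivative r2 y) (at y)" using r1_deriv[of y] y z e x r0 by auto
      ultimately show "\<exists>d. (r1 has_real_derivative d) (at y) \<and> d \<ge> 0" by blast
    qed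
    moreover have "(w has_real_derivative (r1 z - r1 x * 1)) (at z)"
      unfolding w_def by (intro DERIV_diff DERIV_cmult DERIV_ident r_at) (use z e x r0 in auto)
    ultimately show "\<exists>y. (w has_real_derivative y) (at z) \<and> y \<le> 0" by force
  qed
  have "(w \<longlongrightarrow> 0 - r1 x * 0) (at_right 0)"
    unfolding w_def by (intro tendsto_intros r_regular)
  moreover have "eventually (\<lambda>e. w x \<le> w e) (at_right 0)"
    using eventually_at_right_real[of 0 x] x by (auto elim!: eventually_mono intro: wle)
  ultimately have "w x \<le> 0" using tendsto_lowerbound[of w 0 "at_right 0" "w x"] by simp
  thus ?thesis by (simp add: w_def mult.commute)
qed

lemma A_ge1: assumes r0: "0 < \<rho>0" "\<rho>0 \<le> 1" shows "alpha1 f1 phi1 t0 \<rho>0 (r \<rho>0) \<ge> 1"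
proof -
  note sf = setup_facts[OF r0 r0(1) order_refl]
  have "b1 f1 \<rho>0 / b0 f1 (r \<rho>0) \<ge> 1" using sf by simp
  thus ?thesis unfolding alpha1_def by simp
qed

lemma B_le1: assumes r0: "0 < \<rho>0" "\<rho>0 \<le> 1" shows "alpha0 f1 phi1 t0 \<rho>0 (r \<rho>0) \<le> 1"
proof -
  note sf = setup_facts[OF r0 r0(1) order_refl]
  have "b0 f1 \<rho>0 / b1 f1 (r \<rho>0) \<le> 1" using sf by simp
  thus ?thesis unfolding alpha0_def by simp
qed

lemma upper_bound: assumes r0: "0 < \<rho>0" "\<rho>0 \<le> 1" shows "GG \<rho>0 \<le> alpha1 f1 phi1 t0 \<rho>0 (r \<rho>0)"
proof (rule ccontr)
  define A where "A = alpha1 f1 phi1 t0 \<rho>0 (r \<rho>0)"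
  assume "\<not> GG \<rho>0 \<le> alpha1 f1 phi1 t0 \<rho>0 (r \<rho>0)"
  hence g0: "GG \<rho>0 > A" by (simp add: A_def)
  show False
  proof (cases "\<exists>x0. 0 < x0 \<and> x0 < \<rho>0 \<and> GG x0 \<le> A")
    case True
    then obtain x0 where x0: "0 < x0" "x0 < \<rho>0" "GG x0 \<le> A" by blast
    define S where "S = {x0..\<rho>0} \<inter> GG -` {..A}"
    have cS: "closed S" unfolding S_def
      by (rule continuous_closed_preimage) (use GG_cont_on x0 r0 in auto)
    have x0S: "x0 \<in> S" using x0 by (auto simp: S_def)
    have bS: "bdd_above S" by (rule bdd_aboveI[of _ \<rho>0]) (auto simp: S_def)
    define a where "a = Sup S"
    have aS: "a \<in> S" unfolding a_def using closed_contains_Sup[OF _ bS cS] x0S by blast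
    hence a: "x0 \<le> a" "a \<le> \<rho>0" "GG a \<le> A" by (auto simp: S_def)
    have a2: "a < \<rho>0" using a g0 by (cases "a = \<rho>0") auto
    have reg: "GG z > A" if "a < z" "z \<le> \<rho>0" for z
    proof (rule ccontr)
      assume "\<not> GG z > A"
      hence "z \<in> S" using that a x0 by (auto simp: S_def)
      hence "z \<le> a" unfolding a_def using bS by (rule cSup_upper)
      thus False using that by simp
    qed
    have "GG \<rho>0 < GG a"
      using up_mono(3)[OF r0 _ a2, of a] reg a a2 x0 by (auto simp: A_def)
    thus False using a g0 by simp
  next
    case False
    hence reg: "GG z > A" if "0 < z" "z \<le> \<rho>0" for z
      using that g0 by (cases "z = \<rho>0") force+
    have c1: "GG \<rho>0 > 1" using g0 A_ge1[OF r0] by (simp add: A_def)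
    have "eventually (\<lambda>x. GG \<rho>0 \<le> (f x / x) / (f (r x) / r x)) (at_right 0)"
      using eventually_at_right_real[OF r0(1)]
    proof (rule eventually_mono)
      fix x assume x: "x \<in> {0<..<\<rho>0}"
      have "GG \<rho>0 < GG x"
        by (rule up_mono(3)[OF r0 order_refl r0(1)]) (use reg x in \<open>auto simp: A_def\<close>)
      also have "GG x \<le> (f x / x) / (f (r x) / r x)"
        using GG_le_Qf[of x] up_concave[OF r0 _ , of x] reg x r0 by (auto simp: A_def)
      finally show "GG \<rho>0 \<le> (f x / x) / (f (r x) / r x)" by simp
    qed
    hence "GG \<rho>0 \<le> 1" using tendsto_lowerbound[OF Qf_lim] by simp
    thus False using c1 by simp
  qed
qed

lemma lower_bound: assumes r0: "0 < \<rho>0" "\<rho>0 \<le> 1" shows "alpha0 f1 phi1 t0 \<rho>0 (r \<rho>0) \<le> GG \<rho>0"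
proof (rule ccontr)
  define B where "B = alpha0 f1 phi1 t0 \<rho>0 (r \<rho>0)"
  assume "\<not> alpha0 f1 phi1 t0 \<rho>0 (r \<rho>0) \<le> GG \<rho>0"
  hence g0: "GG \<rho>0 < B" by (simp add: B_def)
  show False
  proof (cases "\<exists>x0. 0 < x0 \<and> x0 < \<rho>0 \<and> GG x0 \<ge> B")
    case True
    then obtain x0 where x0: "0 < x0" "x0 < \<rho>0" "GG x0 \<ge> B" by blast
    define S where "S = {x0..\<rho>0} \<inter> GG -` {B..}"
    have cS: "closed S" unfolding S_def
      by (rule continuous_closed_preimage) (use GG_cont_on x0 r0 in auto)
    have x0S: "x0 \<in> S" using x0 by (auto simp: S_def)
    have bS: "bdd_above S" by (rule bdd_aboveI[of _ \<rho>0]) (auto simp: S_def)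
    define a where "a = Sup S"
    have aS: "a \<in> S" unfolding a_def using closed_contains_Sup[OF _ bS cS] x0S by blast
    hence a: "x0 \<le> a" "a \<le> \<rho>0" "GG a \<ge> B" by (auto simp: S_def)
    have a2: "a < \<rho>0" using a g0 by (cases "a = \<rho>0") auto
    have reg: "GG z < B" if "a < z" "z \<le> \<rho>0" for z
    proof (rule ccontr)
      assume "\<not> GG z < B"
      hence "z \<in> S" using that a x0 by (auto simp: S_def)
      hence "z \<le> a" unfolding a_def using bS by (rule cSup_upper)
      thus False using that by simp
    qed
    have "GG a < GG \<rho>0"
      using lo_mono(3)[OF r0 _ a2, of a] reg a a2 x0 by (auto simp: B_def)
    thus False using a g0 by simp
  next
    case False
    hence reg: "GG z < B" if "0 < z" "z \<le> \<rho>0" for z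
      using that g0 by (cases "z = \<rho>0") force+
    have c1: "GG \<rho>0 < 1" using g0 B_le1[OF r0] by (simp add: B_def)
    have "eventually (\<lambda>x. (f x / x) / (f (r x) / r x) \<le> GG \<rho>0) (at_right 0)"
      using eventually_at_right_real[OF r0(1)]
    proof (rule eventually_mono)
      fix x assume x: "x \<in> {0<..<\<rho>0}"
      have "(f x / x) / (f (r x) / r x) \<le> GG x"
        using Qf_le_GG[of x] lo_convex[OF r0 _ , of x] reg x r0 by (auto simp: B_def)
      also have "GG x < GG \<rho>0"
        by (rule lo_mono(3)[OF r0 order_refl r0(1)]) (use reg x in \<open>auto simp: B_def\<close>)
      finally show "(f x / x) / (f (r x) / r x) \<le> GG \<rho>0" by simp
    qed
    hence "1 \<le> GG \<rho>0" using tendsto_upperbound[OF Qf_lim] by simp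
    thus False using c1 by simp
  qed
qed

theorem main:
  "\<forall>\<rho>. 0 < \<rho> \<and> \<rho> \<le> 1 \<longrightarrow>
           alpha0 f1 phi1 t0 \<rho> (r \<rho>) * tau f r \<rho> \<le> r1 \<rho> \<and>
           r1 \<rho> \<le> alpha1 f1 phi1 t0 \<rho> (r \<rho>) * tau f r \<rho>"
proof (intro allI impI)
  fix \<rho> :: real assume r: "0 < \<rho> \<and> \<rho> \<le> 1"
  hence Tp: "T \<rho> > 0" using T_pos by auto
  have u: "GG \<rho> \<le> alpha1 f1 phi1 t0 \<rho> (r \<rho>)" "alpha0 f1 phi1 t0 \<rho> (r \<rho>) \<le> GG \<rho>"
    using upper_bound[of \<rho>] lower_bound[of \<rho>] r by auto
  thus "alpha0 f1 phi1 t0 \<rho> (r \<rho>) * tau f r \<rho> \<le> r1 \<rho> \<and> r1 \<rho> \<le> alpha1 f1 phi1 t0 \<rho> (r \<rho>) * tau f r \<rho>"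
    unfolding GG_def using Tp by (simp add: pos_le_divide_eq pos_divide_le_eq)
qed

end

theorem theorem4p2:
  fixes n :: nat and \<kappa> f f1 \<phi> phi1 phi2 h h1 h2 r r1 r2 :: "real \<Rightarrow> real"
    and lam t0 :: real
  assumes n2: "n \<ge> 2"
    (* kappa continuous on [0,\<infinity>); f'' + kappa f = 0, f(0) = 0, f'(0) = 1 *)
    and kappa_cont: "continuous_on {0..} \<kappa>"
    and f_deriv: "\<And>x. x \<ge> 0 \<Longrightarrow> (f has_real_derivative f1 x) (at x within {0..})"
    and f1_deriv: "\<And>x. x \<ge> 0 \<Longrightarrow> (f1 has_real_derivative (- \<kappa> x * f x)) (at x within {0..})"
    and f0: "f 0 = 0" and f1_0: "f1 0 = 1"
    (* lambda > 0, mu_+(max lambda 1) \<le> 1 *)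
    and lam_pos: "lam > 0"
    and mu: "mu_plus \<kappa> (max lam 1) \<le> 1"
    (* (A1): h is C^2 and strictly convex on (0,\<infinity>) *)
    and h_deriv: "\<And>v. v > 0 \<Longrightarrow> (h has_real_derivative h1 v) (at v)"
    and h1_deriv: "\<And>v. v > 0 \<Longrightarrow> (h1 has_real_derivative h2 v) (at v)"
    and h2_cont: "continuous_on {0<..} h2"
    and h_strict: "strictly_convex_on {0<..} h"
    (* (A4): phi : (0,\<infinity>) \<rightarrow> (0,\<infinity>) is C^2 and convex *)
    and phi_pos: "\<And>v. v > 0 \<Longrightarrow> \<phi> v > 0"
    and phi_deriv: "\<And>v. v > 0 \<Longrightarrow> (\<phi> has_real_derivative phi1 v) (at v)"
    and phi1_deriv: "\<And>v. v > 0 \<Longrightarrow> (phi1 has_real_derivative phi2 v) (at v)"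
    and phi2_cont: "continuous_on {0<..} phi2"
    and phi_convex: "convex_on {0<..} \<phi>"
    (* (A5): v \<mapsto> v phi'(v) is increasing *)
    and A5: "mono_on {0<..} (\<lambda>v. v * phi1 v)"
    (* (A6) *)
    and t0_nonneg: "t0 \<ge> 0"
    and phi1_t0: "(t0 > 0 \<and> phi1 t0 = 0) \<or> (t0 = 0 \<and> (phi1 \<longlongrightarrow> 0) (at_right 0))"
    and q1_C1: "\<exists>dq. continuous_on {1..} dq \<and>
                 (\<forall>s\<ge>1. (q1 phi1 t0 has_real_derivative dq s) (at s within {1..}) \<and> dq s < 0)"
    and q0_C1: "\<exists>dq. continuous_on {0<..1} dq \<and>
                 (\<forall>s. 0 < s \<and> s \<le> 1 \<longrightarrow>
                    (q0 phi1 t0 has_real_derivative dq s) (at s within {0<..1}) \<and> dq s < 0)"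
    and q1_lim: "(q1 phi1 t0 \<longlongrightarrow> 0) at_top"
    and q0_lim: "filterlim (q0 phi1 t0) at_top (at_right 0)"
    (* r is a regular equilibrium solution with r(1) = lambda *)
    and r_deriv: "\<And>\<rho>. 0 < \<rho> \<Longrightarrow> \<rho> \<le> 1 \<Longrightarrow> (r has_real_derivative r1 \<rho>) (at \<rho> within {0<..1})"
    and r1_cont: "continuous_on {0<..1} r1"
    and r1_deriv: "\<And>\<rho>. 0 < \<rho> \<Longrightarrow> \<rho> < 1 \<Longrightarrow> (r1 has_real_derivative r2 \<rho>) (at \<rho>)"
    and r1_pos: "\<And>\<rho>. 0 < \<rho> \<Longrightarrow> \<rho> \<le> 1 \<Longrightarrow> r1 \<rho> > 0"
    and r_regular: "(r \<longlongrightarrow> 0) (at_right 0)"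
    and r_1: "r 1 = lam"
    and r_ode: "\<And>\<rho>. 0 < \<rho> \<Longrightarrow> \<rho> < 1 \<Longrightarrow>
       f \<rho> * (phi2 (r1 \<rho>) + h2 (r1 \<rho> * tau f r \<rho> ^ (n - 1)) * tau f r \<rho> ^ (2 * (n - 1))) * r2 \<rho>
       = real (n - 1) * (f1 (r \<rho>) * phi1 (tau f r \<rho>) - f1 \<rho> * phi1 (r1 \<rho>))
         - real (n - 1) * (f1 (r \<rho>) * r1 \<rho> - f1 \<rho> * tau f r \<rho>)
             * h2 (r1 \<rho> * tau f r \<rho> ^ (n - 1)) * r1 \<rho> * tau f r \<rho> ^ (2 * n - 3)"
  shows "\<forall>\<rho>. 0 < \<rho> \<and> \<rho> \<le> 1 \<longrightarrow>
           alpha0 f1 phi1 t0 \<rho> (r \<rho>) * tau f r \<rho> \<le> r1 \<rho> \<and>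
           r1 \<rho> \<le> alpha1 f1 phi1 t0 \<rho> (r \<rho>) * tau f r \<rho>"
proof -
  interpret eqs n \<kappa> f f1 \<phi> phi1 phi2 h h1 h2 r r1 r2 lam t0
    by (rule eqs.intro[OF assms])
  show ?thesis by (rule main)
qed

end
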